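(* Let $(V_1,\dots,V_n)$ be an $n$-tuple of doubly non-commuting isometries on a Hilbert space $H$. Then there exist a Hilbert space $\mathcal K\supseteq H$, with orthogonal projection $P_H:\mathcal K\to H$, and unitary operators $\mathcal U_1,\dots,\mathcal U_n$ on $\mathcal K$ such that: (1) $(\mathcal U_1,\dots,\mathcal U_n)$ is an $n$-tuple of doubly non-commuting isometries (with the same structure constants); (2) $\mathcal U_1,\dots,\mathcal U_n$ leave $H$ invariant; (3) $\mathcal U_i|_H=V_i$ for $i=1,\dots,n$; (4) $V_i^*=(P_H\circ\mathcal U_i^* )|_H$ for $i=1,\dots,n$.
   Context: Fix $n\ge1$ and $z_{ij}\in\mathbb T$ for $i\ne j$ in $\{1,\dots,n\}$ with $z_{ji}=\overline{z_{ij}}$. An $n$-tuple $(V_1,\dots,V_n)$ of isometries on a Hilbert space is doubly non-commuting if $V_i^*V_j=\overline{z_{ij}}V_jV_i^*$ for all $i\neq j$. *)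

theory Defs
  imports Complex_Main
begin

text \<open>A complex Hilbert space, given relative to a carrier set together with its
  vector-space operations and its inner product (linear in the first argument,
  conjugate-linear in the second).\<close>

record 'a hspace =
  hcarrier :: "'a set"
  hzero    :: "'a"
  hadd     :: "'a \<Rightarrow> 'a \<Rightarrow> 'a"
  hscale   :: "complex \<Rightarrow> 'a \<Rightarrow> 'a"
  hinner   :: "'a \<Rightarrow> 'a \<Rightarrow> complex"

definition hsub :: "'a hspace \<Rightarrow> 'a \<Rightarrow> 'a \<Rightarrow> 'a" where
  "hsub X x y = hadd X x (hscale X (-1) y)"

definition hnorm :: "'a hspace \<Rightarrow> 'a \<Rightarrow> real" where
  "hnorm X x = sqrt (Re (hinner X x x))"

definition hilbert_space :: "'a hspace \<Rightarrow> bool" where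
  "hilbert_space X \<longleftrightarrow>
     (let C = hcarrier X in
      hzero X \<in> C \<and>
      (\<forall>x\<in>C. \<forall>y\<in>C. hadd X x y \<in> C) \<and>
      (\<forall>a. \<forall>x\<in>C. hscale X a x \<in> C) \<and>
      (\<forall>x\<in>C. \<forall>y\<in>C. \<forall>z\<in>C. hadd X (hadd X x y) z = hadd X x (hadd X y z)) \<and>
      (\<forall>x\<in>C. \<forall>y\<in>C. hadd X x y = hadd X y x) \<and>
      (\<forall>x\<in>C. hadd X x (hzero X) = x) \<and>
      (\<forall>x\<in>C. hadd X x (hscale X (-1) x) = hzero X) \<and>
      (\<forall>a b. \<forall>x\<in>C. hscale X a (hscale X b x) = hscale X (a * b) x) \<and>
      (\<forall>x\<in>C. hscale X 1 x = x) \<and>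
      (\<forall>a. \<forall>x\<in>C. \<forall>y\<in>C. hscale X a (hadd X x y) = hadd X (hscale X a x) (hscale X a y)) \<and>
      (\<forall>a b. \<forall>x\<in>C. hscale X (a + b) x = hadd X (hscale X a x) (hscale X b x)) \<and>
      (\<forall>x\<in>C. \<forall>y\<in>C. hinner X x y = cnj (hinner X y x)) \<and>
      (\<forall>x\<in>C. \<forall>y\<in>C. \<forall>z\<in>C. hinner X (hadd X x y) z = hinner X x z + hinner X y z) \<and>
      (\<forall>a. \<forall>x\<in>C. \<forall>y\<in>C. hinner X (hscale X a x) y = a * hinner X x y) \<and>
      (\<forall>x\<in>C. Im (hinner X x x) = 0 \<and> Re (hinner X x x) \<ge> 0) \<and>
      (\<forall>x\<in>C. hinner X x x = 0 \<longrightarrow> x = hzero X) \<and>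
      \<comment> \<open>completeness\<close>
      (\<forall>f::nat \<Rightarrow> 'a. (\<forall>k. f k \<in> C) \<longrightarrow>
          (\<forall>e>0. \<exists>N. \<forall>m\<ge>N. \<forall>k\<ge>N. hnorm X (hsub X (f m) (f k)) < e) \<longrightarrow>
          (\<exists>l\<in>C. (\<lambda>k. hnorm X (hsub X (f k) l)) \<longlonglongrightarrow> 0)))"

definition bounded_op :: "'a hspace \<Rightarrow> ('a \<Rightarrow> 'a) \<Rightarrow> bool" where
  "bounded_op X T \<longleftrightarrow>
     (\<forall>x\<in>hcarrier X. T x \<in> hcarrier X) \<and>
     (\<forall>x\<in>hcarrier X. \<forall>y\<in>hcarrier X. T (hadd X x y) = hadd X (T x) (T y)) \<and>
     (\<forall>a. \<forall>x\<in>hcarrier X. T (hscale X a x) = hscale X a (T x)) \<and>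
     (\<exists>c. \<forall>x\<in>hcarrier X. hnorm X (T x) \<le> c * hnorm X x)"

definition adj :: "'a hspace \<Rightarrow> ('a \<Rightarrow> 'a) \<Rightarrow> 'a \<Rightarrow> 'a" where
  "adj X T y = (THE z. z \<in> hcarrier X \<and> (\<forall>x\<in>hcarrier X. hinner X (T x) y = hinner X x z))"

definition isometry_op :: "'a hspace \<Rightarrow> ('a \<Rightarrow> 'a) \<Rightarrow> bool" where
  "isometry_op X T \<longleftrightarrow> bounded_op X T \<and> (\<forall>x\<in>hcarrier X. adj X T (T x) = x)"

definition unitary_op :: "'a hspace \<Rightarrow> ('a \<Rightarrow> 'a) \<Rightarrow> bool" where
  "unitary_op X T \<longleftrightarrow> bounded_op X T \<and>
     (\<forall>x\<in>hcarrier X. adj X T (T x) = x) \<and> (\<forall>x\<in>hcarrier X. T (adj X T x) = x)"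

definition doubly_noncommuting ::
  "'a hspace \<Rightarrow> nat \<Rightarrow> (nat \<Rightarrow> nat \<Rightarrow> complex) \<Rightarrow> (nat \<Rightarrow> 'a \<Rightarrow> 'a) \<Rightarrow> bool" where
  "doubly_noncommuting X n z V \<longleftrightarrow>
     (\<forall>i\<in>{1..n}. isometry_op X (V i)) \<and>
     (\<forall>i\<in>{1..n}. \<forall>j\<in>{1..n}. i \<noteq> j \<longrightarrow>
        (\<forall>x\<in>hcarrier X. adj X (V i) (V j x) = hscale X (cnj (z i j)) (V j (adj X (V i) x))))"

text \<open>Isometric linear embedding J of H into K (identifying H with the subspace J(H) of K).\<close>
definition hembedding :: "'a hspace \<Rightarrow> 'b hspace \<Rightarrow> ('a \<Rightarrow> 'b) \<Rightarrow> bool" where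
  "hembedding H K J \<longleftrightarrow>
     (\<forall>x\<in>hcarrier H. J x \<in> hcarrier K) \<and>
     (\<forall>x\<in>hcarrier H. \<forall>y\<in>hcarrier H. J (hadd H x y) = hadd K (J x) (J y)) \<and>
     (\<forall>a. \<forall>x\<in>hcarrier H. J (hscale H a x) = hscale K a (J x)) \<and>
     (\<forall>x\<in>hcarrier H. \<forall>y\<in>hcarrier H. hinner K (J x) (J y) = hinner H x y)"

definition orth_proj :: "'a hspace \<Rightarrow> 'b hspace \<Rightarrow> ('a \<Rightarrow> 'b) \<Rightarrow> ('b \<Rightarrow> 'a) \<Rightarrow> bool" where
  "orth_proj H K J P \<longleftrightarrow>
     (\<forall>k\<in>hcarrier K. P k \<in> hcarrier H \<and>
        (\<forall>h\<in>hcarrier H. hinner K (hsub K k (J (P k))) (J h) = 0))"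

end

theory Submission
  imports Defs "HOL-Analysis.Analysis"
begin



locale hs =
  fixes X :: "'a hspace"
  assumes hs: "hilbert_space X"
begin

abbreviation "C \<equiv> hcarrier X"
abbreviation "pl \<equiv> hadd X"
abbreviation "sm \<equiv> hscale X"
abbreviation "ip \<equiv> hinner X"
abbreviation "z0 \<equiv> hzero X"

definition nsq :: "'a \<Rightarrow> real" where "nsq x = Re (ip x x)"

lemmas ax = hs[unfolded hilbert_space_def Let_def]

lemmas zero_in[simp] = ax[THEN conjunct1, rule_format]
lemmas add_in[simp] = ax[THEN conjunct2, THEN conjunct1, rule_format]
lemmas scale_in[simp] = ax[THEN conjunct2, THEN conjunct2, THEN conjunct1, rule_format]
lemmas add_assoc = ax[THEN conjunct2, THEN conjunct2, THEN conjunct2, THEN conjunct1, rule_format]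
lemmas add_comm = ax[THEN conjunct2, THEN conjunct2, THEN conjunct2, THEN conjunct2, THEN conjunct1, rule_format]
lemmas add_zero[simp] = ax[THEN conjunct2, THEN conjunct2, THEN conjunct2, THEN conjunct2, THEN conjunct2, THEN conjunct1, rule_format]
lemmas add_neg = ax[THEN conjunct2, THEN conjunct2, THEN conjunct2, THEN conjunct2, THEN conjunct2, THEN conjunct2, THEN conjunct1, rule_format]
lemmas scale_scale[simp] = ax[THEN conjunct2, THEN conjunct2, THEN conjunct2, THEN conjunct2, THEN conjunct2, THEN conjunct2, THEN conjunct2, THEN conjunct1, rule_format]
lemmas scale_one[simp] = ax[THEN conjunct2, THEN conjunct2, THEN conjunct2, THEN conjunct2, THEN conjunct2, THEN conjunct2, THEN conjunct2, THEN conjunct2, THEN conjunct1, rule_format]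
lemmas scale_add_right = ax[THEN conjunct2, THEN conjunct2, THEN conjunct2, THEN conjunct2, THEN conjunct2, THEN conjunct2, THEN conjunct2, THEN conjunct2, THEN conjunct2, THEN conjunct1, rule_format]
lemmas scale_add_left = ax[THEN conjunct2, THEN conjunct2, THEN conjunct2, THEN conjunct2, THEN conjunct2, THEN conjunct2, THEN conjunct2, THEN conjunct2, THEN conjunct2, THEN conjunct2, THEN conjunct1, rule_format]
lemmas inner_sym = ax[THEN conjunct2, THEN conjunct2, THEN conjunct2, THEN conjunct2, THEN conjunct2, THEN conjunct2, THEN conjunct2, THEN conjunct2, THEN conjunct2, THEN conjunct2, THEN conjunct2, THEN conjunct1, rule_format]
lemmas inner_add_left[simp] = ax[THEN conjunct2, THEN conjunct2, THEN conjunct2, THEN conjunct2, THEN conjunct2, THEN conjunct2, THEN conjunct2, THEN conjunct2, THEN conjunct2, THEN conjunct2, THEN conjunct2, THEN conjunct2, THEN conjunct1, rule_format]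
lemmas inner_scale_left[simp] = ax[THEN conjunct2, THEN conjunct2, THEN conjunct2, THEN conjunct2, THEN conjunct2, THEN conjunct2, THEN conjunct2, THEN conjunct2, THEN conjunct2, THEN conjunct2, THEN conjunct2, THEN conjunct2, THEN conjunct2, THEN conjunct1, rule_format]
lemmas inner_pos = ax[THEN conjunct2, THEN conjunct2, THEN conjunct2, THEN conjunct2, THEN conjunct2, THEN conjunct2, THEN conjunct2, THEN conjunct2, THEN conjunct2, THEN conjunct2, THEN conjunct2, THEN conjunct2, THEN conjunct2, THEN conjunct2, THEN conjunct1, rule_format]
lemmas inner_zero_eq = ax[THEN conjunct2, THEN conjunct2, THEN conjunct2, THEN conjunct2, THEN conjunct2, THEN conjunct2, THEN conjunct2, THEN conjunct2, THEN conjunct2, THEN conjunct2, THEN conjunct2, THEN conjunct2, THEN conjunct2, THEN conjunct2, THEN conjunct2, THEN conjunct1, rule_format]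
lemmas complete = ax[THEN conjunct2, THEN conjunct2, THEN conjunct2, THEN conjunct2, THEN conjunct2, THEN conjunct2, THEN conjunct2, THEN conjunct2, THEN conjunct2, THEN conjunct2, THEN conjunct2, THEN conjunct2, THEN conjunct2, THEN conjunct2, THEN conjunct2, THEN conjunct2, rule_format]

lemma neg_add: "x \<in> C \<Longrightarrow> pl (sm (-1) x) x = z0"
  using add_comm[of x "sm (-1) x"] add_neg[of x] by simp

lemma add_left_cancel:
  assumes "x \<in> C" "y \<in> C" "w \<in> C" "pl x y = pl x w" shows "y = w"
proof -
  have "pl (sm (-1) x) (pl x y) = pl (sm (-1) x) (pl x w)" using assms by simp
  then have "pl (pl (sm (-1) x) x) y = pl (pl (sm (-1) x) x) w"
    using assms by (simp add: add_assoc)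
  then have "pl z0 y = pl z0 w" using assms neg_add by simp
  then show ?thesis using assms add_comm[of z0 y] add_comm[of z0 w] by simp
qed

lemma zero_add[simp]: "x \<in> C \<Longrightarrow> pl z0 x = x" using add_comm[of z0 x] by simp

lemma scale_zero_left[simp]: "x \<in> C \<Longrightarrow> sm 0 x = z0"
proof -
  assume x: "x \<in> C"
  have "pl (sm 0 x) (sm 0 x) = pl (sm 0 x) z0" using x scale_add_left[of x 0 0] by simp
  then show ?thesis using x add_left_cancel scale_in zero_in by blast
qed

lemma scale_zero_right[simp]: "sm a z0 = z0"
  using scale_scale[of z0 a 0] scale_zero_left[of z0] by simp

lemma inner_zero_left[simp]: "y \<in> C \<Longrightarrow> ip z0 y = 0"
  using inner_scale_left[of z0 y 0] by simp

lemma inner_add_right[simp]: "x \<in> C \<Longrightarrow> y \<in> C \<Longrightarrow> w \<in> C \<Longrightarrow> ip w (pl x y) = ip w x + ip w y"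
  using inner_sym[of w "pl x y"] inner_sym[of w x] inner_sym[of w y] inner_add_left[of x y w] by simp

lemma inner_scale_right[simp]: "x \<in> C \<Longrightarrow> y \<in> C \<Longrightarrow> ip y (sm a x) = cnj a * ip y x"
  using inner_sym[of y "sm a x"] inner_sym[of y x] inner_scale_left[of x y a] by simp

lemma inner_zero_right[simp]: "y \<in> C \<Longrightarrow> ip y z0 = 0"
  using inner_sym[of y z0] by simp

lemma inner_self_real: "x \<in> C \<Longrightarrow> ip x x = complex_of_real (nsq x)"
  using inner_pos[of x] unfolding nsq_def by (simp add: complex_eq_iff)

lemma nsq_nonneg[simp]: "x \<in> C \<Longrightarrow> nsq x \<ge> 0" using inner_pos nsq_def by auto

lemma nsq_zero_iff: "x \<in> C \<Longrightarrow> nsq x = 0 \<longleftrightarrow> x = z0"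
  using inner_self_real inner_zero_eq by fastforce

lemma nsq_zero[simp]: "nsq z0 = 0" by (simp add: nsq_def)

lemma hnorm_eq: "hnorm X x = sqrt (nsq x)" by (simp add: hnorm_def nsq_def)

lemma hsub_eq: "hsub X x y = pl x (sm (-1) y)" by (simp add: hsub_def)

lemma sub_in[simp]: "x \<in> C \<Longrightarrow> y \<in> C \<Longrightarrow> hsub X x y \<in> C" by (simp add: hsub_def)

lemma inner_sub_left[simp]: "x \<in> C \<Longrightarrow> y \<in> C \<Longrightarrow> w \<in> C \<Longrightarrow> ip (hsub X x y) w = ip x w - ip y w"
  by (simp add: hsub_def)
lemma inner_sub_right[simp]: "x \<in> C \<Longrightarrow> y \<in> C \<Longrightarrow> w \<in> C \<Longrightarrow> ip w (hsub X x y) = ip w x - ip w y"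
  by (simp add: hsub_def)

lemma sub_self[simp]: "x \<in> C \<Longrightarrow> hsub X x x = z0" by (simp add: hsub_def add_neg)

lemma eq_if_sub_zero: assumes "x \<in> C" "y \<in> C" "hsub X x y = z0" shows "x = y"
proof -
  have "pl (pl x (sm (-1) y)) y = pl z0 y" using assms by (simp add: hsub_def)
  then have "pl x (pl (sm (-1) y) y) = y" using assms by (simp add: add_assoc)
  then show ?thesis using assms neg_add by simp
qed

lemma ext_inner:
  assumes "x \<in> C" "y \<in> C" "\<And>w. w \<in> C \<Longrightarrow> ip x w = ip y w" shows "x = y"
proof -
  have "ip (hsub X x y) (hsub X x y) = 0" using assms by simp
  then show ?thesis using assms inner_zero_eq eq_if_sub_zero sub_in by blast
qed

lemma ext_inner':
  assumes "x \<in> C" "y \<in> C" "\<And>w. w \<in> C \<Longrightarrow> ip w x = ip w y" shows "x = y"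
proof (rule ext_inner[OF assms(1,2)])
  fix w assume w: "w \<in> C"
  have "ip x w = cnj (ip w x)" using inner_sym[of x w] w assms by blast
  also have "\<dots> = cnj (ip w y)" using assms(3) w by simp
  also have "\<dots> = ip y w" using inner_sym[of y w] w assms by simp
  finally show "ip x w = ip y w" .
qed

lemma nsq_add: "x \<in> C \<Longrightarrow> y \<in> C \<Longrightarrow> nsq (pl x y) = nsq x + nsq y + 2 * Re (ip x y)"
  unfolding nsq_def using inner_sym[of y x] by simp

lemma nsq_scale: "x \<in> C \<Longrightarrow> nsq (sm a x) = (cmod a)^2 * nsq x"
proof -
  assume x: "x \<in> C"
  have "ip (sm a x) (sm a x) = (a * cnj a) * ip x x" using x by simp
  also have "\<dots> = of_real ((cmod a)^2) * of_real (nsq x)" 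
    by (metis complex_norm_square inner_self_real x)
  also have "\<dots> = of_real ((cmod a)^2 * nsq x)" by simp
  finally show ?thesis by (simp add: nsq_def)
qed

lemma cauchy_schwarz: assumes "x \<in> C" "y \<in> C" shows "(cmod (ip x y))^2 \<le> nsq x * nsq y"
proof (cases "y = z0")
  case True then show ?thesis using assms by simp
next
  case False
  have ny: "nsq y > 0" using False assms nsq_zero_iff[of y] nsq_nonneg[of y] by linarith
  define a where "a = ip x y"
  define t where "t = a / of_real (nsq y)"
  have yx: "ip y x = cnj a" using assms inner_sym a_def by blast
  have e: "ip (hsub X x (sm t y)) (hsub X x (sm t y)) = ip x x - cnj t * a - t * cnj a + t * cnj t * ip y y"
    using assms yx a_def by (simp add: algebra_simps)
  have sq: "a * cnj a = of_real ((cmod a)^2)" by (metis complex_norm_square)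
  have 1: "cnj t * a = of_real ((cmod a)^2 / nsq y)" unfolding t_def using ny sq
    by (simp add: mult.commute)
  have 2: "t * cnj a = of_real ((cmod a)^2 / nsq y)" unfolding t_def using ny sq
    by simp
  have 3: "t * cnj t * ip y y = of_real ((cmod a)^2 / nsq y)" unfolding t_def using ny sq inner_self_real[OF assms(2)]
    by (simp add: power2_eq_square)
  have "0 \<le> nsq (hsub X x (sm t y))" using assms by simp
  also have "nsq (hsub X x (sm t y)) = nsq x - (cmod a)^2 / nsq y"
    unfolding nsq_def e 1 2 3 by simp
  finally show ?thesis using ny a_def by (simp add: field_simps)
qed

lemma cs_norm: assumes "x \<in> C" "y \<in> C" shows "cmod (ip x y) \<le> sqrt (nsq x) * sqrt (nsq y)"
proof -
  have "cmod (ip x y) \<le> sqrt (nsq x * nsq y)"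
    using cauchy_schwarz[OF assms] by (rule real_le_rsqrt)
  then show ?thesis by (simp add: real_sqrt_mult)
qed

lemma cs_half: "x \<in> C \<Longrightarrow> y \<in> C \<Longrightarrow> cmod (ip x y) \<le> (nsq x + nsq y) / 2"
proof -
  assume a: "x \<in> C" "y \<in> C"
  have "cmod (ip x y) \<le> sqrt (nsq x) * sqrt (nsq y)" using cs_norm a by blast
  also have "\<dots> \<le> (nsq x + nsq y) / 2"
    using a arith_geo_mean_sqrt[of "nsq x" "nsq y"] by (simp add: real_sqrt_mult)
  finally show ?thesis .
qed

lemma nsq_add_le: "x \<in> C \<Longrightarrow> y \<in> C \<Longrightarrow> nsq (pl x y) \<le> 2 * nsq x + 2 * nsq y"
proof -
  assume a: "x \<in> C" "y \<in> C"
  have "Re (ip x y) \<le> cmod (ip x y)" by (rule complex_Re_le_cmod)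
  moreover have "2 * cmod (ip x y) \<le> nsq x + nsq y" using cs_half[OF a] by simp
  ultimately show ?thesis using nsq_add[OF a] by linarith
qed

lemma norm_triangle: assumes a: "x \<in> C" "y \<in> C" shows "sqrt (nsq (pl x y)) \<le> sqrt (nsq x) + sqrt (nsq y)"
proof -
  have "Re (ip x y) \<le> cmod (ip x y)" by (rule complex_Re_le_cmod)
  then have "nsq (pl x y) \<le> (sqrt (nsq x) + sqrt (nsq y))^2"
    using nsq_add[OF a] cs_norm[OF a] a by (simp add: power2_eq_square algebra_simps)
  then show ?thesis using a by (intro real_le_lsqrt) simp_all
qed

end




context hs
begin

definition conv :: "(nat \<Rightarrow> 'a) \<Rightarrow> 'a \<Rightarrow> bool" where
  "conv f l \<longleftrightarrow> (\<lambda>k. nsq (hsub X (f k) l)) \<longlonglongrightarrow> 0"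

definition closed_sub :: "'a set \<Rightarrow> bool" where
  "closed_sub M \<longleftrightarrow> M \<subseteq> C \<and> z0 \<in> M \<and> (\<forall>x\<in>M. \<forall>y\<in>M. pl x y \<in> M) \<and> (\<forall>a. \<forall>x\<in>M. sm a x \<in> M)
     \<and> (\<forall>f l. (\<forall>k. f k \<in> M) \<longrightarrow> l \<in> C \<longrightarrow> conv f l \<longrightarrow> l \<in> M)"

lemma complete':
  assumes f: "\<And>k. f k \<in> C" and c: "\<And>e. e > 0 \<Longrightarrow> \<exists>N. \<forall>m\<ge>N. \<forall>k\<ge>N. nsq (hsub X (f m) (f k)) < e"
  shows "\<exists>l\<in>C. conv f l"
proof -
  have "\<forall>e>0. \<exists>N. \<forall>m\<ge>N. \<forall>k\<ge>N. hnorm X (hsub X (f m) (f k)) < e"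
  proof (intro allI impI)
    fix e :: real assume e: "e > 0"
    obtain N where N: "\<forall>m\<ge>N. \<forall>k\<ge>N. nsq (hsub X (f m) (f k)) < e^2" using c[of "e^2"] e by auto
    show "\<exists>N. \<forall>m\<ge>N. \<forall>k\<ge>N. hnorm X (hsub X (f m) (f k)) < e"
    proof (intro exI allI impI)
      fix m k assume "m \<ge> N" "k \<ge> N"
      then have "nsq (hsub X (f m) (f k)) < e^2" using N by auto
      then have "sqrt (nsq (hsub X (f m) (f k))) < sqrt (e^2)" by (rule real_sqrt_less_mono)
      then show "hnorm X (hsub X (f m) (f k)) < e" unfolding hnorm_eq using e by simp
    qed
  qed
  then obtain l where l: "l \<in> C" "(\<lambda>k. hnorm X (hsub X (f k) l)) \<longlonglongrightarrow> 0" using complete f by blast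
  have "(\<lambda>k. (hnorm X (hsub X (f k) l))^2) \<longlonglongrightarrow> 0^2" by (intro tendsto_power l)
  moreover have "(hnorm X (hsub X (f k) l))^2 = nsq (hsub X (f k) l)" for k
    unfolding hnorm_eq using f l by simp
  ultimately show ?thesis using l unfolding conv_def by auto
qed

lemma nsq_sub_sym: "a \<in> C \<Longrightarrow> b \<in> C \<Longrightarrow> nsq (hsub X a b) = nsq (hsub X b a)"
  unfolding nsq_def by (simp add: algebra_simps)

lemma parallelogram:
  assumes "x \<in> C" "a \<in> C" "b \<in> C"
  shows "nsq (hsub X a b) + 4 * nsq (hsub X x (sm (1/2) (pl a b))) = 2 * nsq (hsub X x a) + 2 * nsq (hsub X x b)"
proof -
  have "ip (hsub X a b) (hsub X a b) + 4 * ip (hsub X x (sm (1/2) (pl a b))) (hsub X x (sm (1/2) (pl a b)))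
     = 2 * ip (hsub X x a) (hsub X x a) + 2 * ip (hsub X x b) (hsub X x b)"
    using assms by (simp add: algebra_simps)
  then have "Re (ip (hsub X a b) (hsub X a b) + 4 * ip (hsub X x (sm (1/2) (pl a b))) (hsub X x (sm (1/2) (pl a b))))
     = Re (2 * ip (hsub X x a) (hsub X x a) + 2 * ip (hsub X x b) (hsub X x b))" by simp
  then show ?thesis unfolding nsq_def by simp
qed

lemma proj_step:
  assumes "w \<in> C" "m \<in> C" "m \<noteq> z0"
  shows "nsq (hsub X w (sm (ip w m / of_real (nsq m)) m)) = nsq w - (cmod (ip w m))^2 / nsq m"
proof -
  have ny: "nsq m > 0" using assms nsq_zero_iff[of m] nsq_nonneg[of m] by linarith
  define a where "a = ip w m"
  define t where "t = a / of_real (nsq m)"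
  have yx: "ip m w = cnj a" using assms inner_sym a_def by blast
  have e: "ip (hsub X w (sm t m)) (hsub X w (sm t m)) = ip w w - cnj t * a - t * cnj a + t * cnj t * ip m m"
    using assms yx a_def by (simp add: algebra_simps)
  have sq: "a * cnj a = of_real ((cmod a)^2)" by (metis complex_norm_square)
  have 1: "cnj t * a = of_real ((cmod a)^2 / nsq m)" unfolding t_def using ny sq
    by (simp add: mult.commute)
  have 2: "t * cnj a = of_real ((cmod a)^2 / nsq m)" unfolding t_def using ny sq
    by simp
  have 3: "t * cnj t * ip m m = of_real ((cmod a)^2 / nsq m)" unfolding t_def using ny sq inner_self_real[OF assms(2)]
    by (simp add: power2_eq_square)
  have "nsq (hsub X w (sm t m)) = Re (ip w w - cnj t * a - t * cnj a + t * cnj t * ip m m)"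
    using e nsq_def by simp
  also have "\<dots> = nsq w - (cmod a)^2 / nsq m" unfolding 1 2 3 by (simp add: nsq_def)
  finally show ?thesis unfolding t_def a_def .
qed

lemma vec_eqI: "x \<in> C \<Longrightarrow> y \<in> C \<Longrightarrow> (\<And>w. w \<in> C \<Longrightarrow> ip x w = ip y w) \<Longrightarrow> x = y"
  by (rule ext_inner)

lemma projection:
  assumes M: "closed_sub M" and x: "x \<in> C"
  shows "\<exists>p\<in>M. \<forall>m\<in>M. ip (hsub X x p) m = 0"
proof -
  have MC: "M \<subseteq> C" and M0: "z0 \<in> M" and Madd: "\<And>a b. a \<in> M \<Longrightarrow> b \<in> M \<Longrightarrow> pl a b \<in> M"
    and Msc: "\<And>c a. a \<in> M \<Longrightarrow> sm c a \<in> M"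
    and Mcl: "\<And>f l. (\<forall>k. f k \<in> M) \<Longrightarrow> l \<in> C \<Longrightarrow> conv f l \<Longrightarrow> l \<in> M"
    using M unfolding closed_sub_def by blast+
  define S where "S = (\<lambda>m. nsq (hsub X x m)) ` M"
  define d where "d = Inf S"
  have Sne: "S \<noteq> {}" using M0 S_def by auto
  have Sbdd: "bdd_below S" unfolding S_def using MC x by (intro bdd_belowI[of _ 0]) auto
  have dle: "d \<le> nsq (hsub X x m)" if "m \<in> M" for m
    unfolding d_def S_def using that Sbdd S_def by (intro cInf_lower) auto
  have d0: "d \<ge> 0" unfolding d_def using Sne Sbdd S_def MC x by (intro cInf_greatest) auto
  have "\<exists>m\<in>M. nsq (hsub X x m) < d + 1 / (real k + 1)" for k
  proof -
    have "Inf S < d + 1 / (real k + 1)" unfolding d_def by (simp add: add_pos_pos)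
    then obtain s where "s \<in> S" "s < d + 1 / (real k + 1)" using cInf_lessD[OF Sne] by blast
    then show ?thesis unfolding S_def by auto
  qed
  then obtain f where fM: "\<And>k. f k \<in> M" and fd: "\<And>k. nsq (hsub X x (f k)) < d + 1 / (real k + 1)"
    by metis
  have fC: "f k \<in> C" for k using fM MC by blast
  have bound: "nsq (hsub X (f k) (f l)) \<le> 2 / (real k + 1) + 2 / (real l + 1)" for k l
  proof -
    have "sm (1/2) (pl (f k) (f l)) \<in> M" using fM Madd Msc by blast
    then have "d \<le> nsq (hsub X x (sm (1/2) (pl (f k) (f l))))" by (rule dle)
    then show ?thesis using parallelogram[OF x fC fC, of k l] fd[of k] fd[of l] by linarith
  qed
  have "\<exists>l\<in>C. conv f l"
  proof (rule complete'[OF fC])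
    fix e :: real assume e: "e > 0"
    obtain N :: nat where N: "4 / e < real N" using reals_Archimedean2 by blast
    show "\<exists>N. \<forall>m\<ge>N. \<forall>k\<ge>N. nsq (hsub X (f m) (f k)) < e"
    proof (intro exI allI impI)
      fix m k assume mk: "m \<ge> N" "k \<ge> N"
      have ineq: "2 / (real j + 1) < e / 2" if "j \<ge> N" for j
      proof -
        have "e * real N \<le> e * real j" using that e by (simp add: mult_left_mono)
        moreover have "4 < e * real N" using N e by (simp add: field_simps)
        ultimately have "4 < e * real j" by linarith
        then have "4 < e * (real j + 1)" using e by (simp add: distrib_left)
        then show ?thesis using e by (simp add: field_simps)
      qed
      have "2 / (real m + 1) < e / 2" "2 / (real k + 1) < e / 2" using ineq mk by auto
      then show "nsq (hsub X (f m) (f k)) < e" using bound[of m k] by linarith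
    qed
  qed
  then obtain p where pC: "p \<in> C" and pc: "conv f p" by blast
  have pM: "p \<in> M" using Mcl fM pC pc by blast
  have pmin: "nsq (hsub X x p) \<le> d"
  proof -
    have lim1: "(\<lambda>k. sqrt (d + 1 / (real k + 1)) + sqrt (nsq (hsub X (f k) p))) \<longlonglongrightarrow> sqrt (d + 0) + sqrt 0"
    proof -
      have i: "(\<lambda>k. 1 / (real k + 1)) \<longlonglongrightarrow> 0"
        using LIMSEQ_inverse_real_of_nat by (simp add: inverse_eq_divide add.commute)
      show ?thesis using pc unfolding conv_def
        by (intro tendsto_add tendsto_real_sqrt tendsto_const i)
    qed
    have "sqrt (nsq (hsub X x p)) \<le> sqrt (d + 1 / (real k + 1)) + sqrt (nsq (hsub X (f k) p))" for k
    proof -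
      have "hsub X x p = pl (hsub X x (f k)) (hsub X (f k) p)"
        using x pC fC by (intro vec_eqI) (simp_all add: algebra_simps)
      then have "sqrt (nsq (hsub X x p)) \<le> sqrt (nsq (hsub X x (f k))) + sqrt (nsq (hsub X (f k) p))"
        using norm_triangle x pC fC by simp
      also have "\<dots> \<le> sqrt (d + 1 / (real k + 1)) + sqrt (nsq (hsub X (f k) p))"
        using fd[of k] by simp
      finally show ?thesis .
    qed
    then have "sqrt (nsq (hsub X x p)) \<le> sqrt d"
      using lim1 by (intro LIMSEQ_le_const[OF lim1[simplified]]) auto
    then show ?thesis using d0 x pC by simp
  qed
  have "ip (hsub X x p) m = 0" if mM: "m \<in> M" for m
  proof (rule ccontr)
    assume ne: "ip (hsub X x p) m \<noteq> 0"
    have mC: "m \<in> C" using mM MC by blast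
    have mnz: "m \<noteq> z0" using ne x pC by auto
    define w where "w = hsub X x p"
    have wC: "w \<in> C" using x pC w_def by simp
    define t where "t = ip w m / of_real (nsq m)"
    have "pl p (sm t m) \<in> M" using pM mM Madd Msc by blast
    then have "d \<le> nsq (hsub X x (pl p (sm t m)))" by (rule dle)
    also have "hsub X x (pl p (sm t m)) = hsub X w (sm t m)"
      unfolding w_def using x pC mC by (intro vec_eqI) (simp_all add: algebra_simps)
    also have "nsq (hsub X w (sm t m)) = nsq w - (cmod (ip w m))^2 / nsq m"
      unfolding t_def by (rule proj_step[OF wC mC mnz])
    finally have dd: "d \<le> nsq w - (cmod (ip w m))^2 / nsq m" .
    have "nsq w \<le> d" using pmin w_def by simp
    then have "(cmod (ip w m))^2 / nsq m \<le> 0" using dd by linarith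
    moreover have "nsq m > 0" using mC mnz nsq_zero_iff[of m] nsq_nonneg[of m] by linarith
    ultimately have "ip w m = 0" by (simp add: divide_le_0_iff)
    then show False using ne w_def by simp
  qed
  then show ?thesis using pM by blast
qed

end




context hs
begin

lemma riesz:
  assumes la: "\<And>x y. x \<in> C \<Longrightarrow> y \<in> C \<Longrightarrow> \<phi> (pl x y) = \<phi> x + \<phi> y"
    and ls: "\<And>a x. x \<in> C \<Longrightarrow> \<phi> (sm a x) = a * \<phi> x"
    and bnd: "\<And>x. x \<in> C \<Longrightarrow> cmod (\<phi> x) \<le> c * sqrt (nsq x)"
  shows "\<exists>z\<in>C. \<forall>x\<in>C. \<phi> x = ip x z"
proof -
  have phi0: "\<phi> z0 = 0" using ls[of z0 0] by simp
  have phisub: "\<phi> (hsub X a b) = \<phi> a - \<phi> b" if "a \<in> C" "b \<in> C" for a b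
    using that la ls unfolding hsub_def by simp
  define N where "N = {x\<in>C. \<phi> x = 0}"
  have cN: "closed_sub N"
    unfolding closed_sub_def
  proof (intro conjI allI ballI impI)
    show "N \<subseteq> C" unfolding N_def by auto
    show "z0 \<in> N" unfolding N_def using phi0 by simp
    show "pl x y \<in> N" if "x \<in> N" "y \<in> N" for x y using that la unfolding N_def by auto
    show "sm a x \<in> N" if "x \<in> N" for a x using that ls unfolding N_def by auto
    fix f l assume fN: "\<forall>k. f k \<in> N" and lC: "l \<in> C" and cv: "conv f l"
    have fC: "f k \<in> C" for k using fN N_def by auto
    have "\<forall>k. cmod (\<phi> l) \<le> c * sqrt (nsq (hsub X (f k) l))"
    proof
      fix k
      have "\<phi> l = - \<phi> (hsub X (f k) l)" using phisub[OF fC lC] fN N_def by auto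
      then have "cmod (\<phi> l) = cmod (\<phi> (hsub X (f k) l))" by simp
      also have "\<dots> \<le> c * sqrt (nsq (hsub X (f k) l))" using bnd fC lC by simp
      finally show "cmod (\<phi> l) \<le> c * sqrt (nsq (hsub X (f k) l))" .
    qed
    moreover have "(\<lambda>k. c * sqrt (nsq (hsub X (f k) l))) \<longlonglongrightarrow> c * sqrt 0"
      using cv unfolding conv_def by (intro tendsto_mult tendsto_const tendsto_real_sqrt)
    ultimately have "cmod (\<phi> l) \<le> 0" by (intro LIMSEQ_le_const) auto
    then show "l \<in> N" using lC N_def by auto
  qed
  show ?thesis
  proof (cases "\<forall>x\<in>C. \<phi> x = 0")
    case True then show ?thesis by (intro bexI[of _ z0]) auto
  next
    case False
    then obtain x0 where x0: "x0 \<in> C" "\<phi> x0 \<noteq> 0" by blast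
    obtain p where pN: "p \<in> N" and orth: "\<forall>m\<in>N. ip (hsub X x0 p) m = 0" using projection[OF cN x0(1)] by blast
    define w where "w = hsub X x0 p"
    have pC: "p \<in> C" using pN N_def by auto
    have wC: "w \<in> C" using w_def x0 pC by simp
    have phw: "\<phi> w = \<phi> x0" unfolding w_def using phisub[OF x0(1) pC] pN N_def by simp
    have wnz: "w \<noteq> z0" using phw x0 phi0 by auto
    have nw: "nsq w > 0" using wC wnz nsq_zero_iff[of w] nsq_nonneg[of w] by linarith
    define z where "z = sm (cnj (\<phi> w / of_real (nsq w))) w"
    have "\<phi> x = ip x z" if xC: "x \<in> C" for x
    proof -
      define u where "u = hsub X (sm (\<phi> w) x) (sm (\<phi> x) w)"
      have uC: "u \<in> C" using u_def xC wC by simp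
      have "\<phi> u = 0" unfolding u_def using phisub xC wC ls by simp
      then have "u \<in> N" using uC N_def by simp
      then have "ip w u = 0" using orth w_def by simp
      then have "cnj (\<phi> w) * ip w x - cnj (\<phi> x) * ip w w = 0" unfolding u_def using xC wC by simp
      then have "cnj (cnj (\<phi> w) * ip w x - cnj (\<phi> x) * ip w w) = 0" by simp
      then have "\<phi> w * ip x w - \<phi> x * of_real (nsq w) = 0"
        using inner_sym[OF xC wC] inner_self_real[OF wC] by simp
      then have "\<phi> x = \<phi> w * ip x w / of_real (nsq w)" using nw by (simp add: field_simps)
      also have "\<dots> = ip x z" unfolding z_def using xC wC by simp
      finally show ?thesis .
    qed
    moreover have "z \<in> C" using z_def wC by simp
    ultimately show ?thesis by blast
  qed
qed

lemma adj_unique: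
  assumes "z \<in> C" "\<And>x. x \<in> C \<Longrightarrow> ip (T x) y = ip x z"
  shows "adj X T y = z"
  unfolding adj_def
proof (rule the_equality)
  show "z \<in> C \<and> (\<forall>x\<in>C. ip (T x) y = ip x z)" using assms by auto
  fix z' assume z': "z' \<in> C \<and> (\<forall>x\<in>C. ip (T x) y = ip x z')"
  show "z' = z" using z' assms by (intro ext_inner') auto
qed

lemma adj_exists:
  assumes T: "bounded_op X T" and y: "y \<in> C"
  shows "adj X T y \<in> C \<and> (\<forall>x\<in>C. ip (T x) y = ip x (adj X T y))"
proof -
  have TC: "\<And>x. x \<in> C \<Longrightarrow> T x \<in> C" and Ta: "\<And>x y. x \<in> C \<Longrightarrow> y \<in> C \<Longrightarrow> T (pl x y) = pl (T x) (T y)"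
    and Ts: "\<And>a x. x \<in> C \<Longrightarrow> T (sm a x) = sm a (T x)" using T unfolding bounded_op_def by auto
  obtain c where c: "\<And>x. x \<in> C \<Longrightarrow> hnorm X (T x) \<le> c * hnorm X x" using T unfolding bounded_op_def by blast
  have "\<exists>z\<in>C. \<forall>x\<in>C. ip (T x) y = ip x z"
  proof (rule riesz[where c = "c * sqrt (nsq y)"])
    fix x assume x: "x \<in> C"
    have "cmod (ip (T x) y) \<le> sqrt (nsq (T x)) * sqrt (nsq y)" using cs_norm TC x y by blast
    also have "\<dots> \<le> (c * sqrt (nsq x)) * sqrt (nsq y)"
      using c[OF x] y unfolding hnorm_eq by (intro mult_right_mono) auto
    finally show "cmod (ip (T x) y) \<le> c * sqrt (nsq y) * sqrt (nsq x)" by (simp add: ac_simps)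
  qed (use TC Ta Ts y in simp_all)
  then obtain z where "z \<in> C" "\<forall>x\<in>C. ip (T x) y = ip x z" by blast
  moreover then have "adj X T y = z" by (intro adj_unique) auto
  ultimately show ?thesis by simp
qed

end




context hs
begin

lemma closed_sub_lim: assumes "closed_sub M" "\<forall>k. f k \<in> M" "l \<in> C" "conv f l" shows "l \<in> M"
proof -
  have "\<forall>f l. (\<forall>k. f k \<in> M) \<longrightarrow> l \<in> C \<longrightarrow> conv f l \<longrightarrow> l \<in> M"
    using assms(1) unfolding closed_sub_def by (elim conjE) assumption
  then show ?thesis using assms(2-4) by blast
qed

definition sqs :: "(nat \<Rightarrow> 'a) \<Rightarrow> bool" where
  "sqs F \<longleftrightarrow> (\<forall>k. F k \<in> C) \<and> (\<lambda>k. nsq (F k)) summable_on UNIV"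

definition Nrm :: "(nat \<Rightarrow> 'a) \<Rightarrow> real" where
  "Nrm F = infsum (\<lambda>k. nsq (F k)) UNIV"

lemma sqs_C: "sqs F \<Longrightarrow> F k \<in> C" unfolding sqs_def by auto

lemma sqs_inner_summable:
  assumes "sqs F" "sqs G" shows "(\<lambda>k. ip (F k) (G k)) summable_on UNIV"
proof (rule abs_summable_summable)
  have s: "(\<lambda>k. (1/2) * (nsq (F k) + nsq (G k))) summable_on UNIV"
    using assms unfolding sqs_def
    by (intro summable_on_cmult_right summable_on_add) auto
  show "(\<lambda>k. norm (ip (F k) (G k))) summable_on UNIV"
    by (rule summable_on_comparison_test[OF s]) (use assms cs_half sqs_C in fastforce)+
qed

lemma sqs_bound:
  assumes "sqs F" "\<And>k. G k \<in> C" "\<And>k. nsq (G k) \<le> c * nsq (F k)"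
  shows "sqs G"
  unfolding sqs_def
proof (intro conjI allI)
  show "G k \<in> C" for k by fact
  have "(\<lambda>k. c * nsq (F k)) summable_on UNIV" using assms(1) unfolding sqs_def
    by (intro summable_on_cmult_right) auto
  then show "(\<lambda>k. nsq (G k)) summable_on UNIV"
    by (rule summable_on_comparison_test) (use assms in auto)
qed

lemma sqs_add: assumes "sqs F" "sqs G" shows "sqs (\<lambda>k. pl (F k) (G k))"
proof -
  have "sqs (\<lambda>k. pl (F k) (G k))" if "sqs (\<lambda>k. pl (F k) (G k))" using that .
  have s: "(\<lambda>k. 2 * nsq (F k) + 2 * nsq (G k)) summable_on UNIV"
    using assms unfolding sqs_def by (intro summable_on_add summable_on_cmult_right) auto
  show ?thesis unfolding sqs_def
  proof (intro conjI allI)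
    show "pl (F k) (G k) \<in> C" for k using assms sqs_C by auto
    show "(\<lambda>k. nsq (pl (F k) (G k))) summable_on UNIV"
      by (rule summable_on_comparison_test[OF s]) (use assms sqs_C nsq_add_le in auto)
  qed
qed

lemma sqs_scale: assumes "sqs F" shows "sqs (\<lambda>k. sm a (F k))"
  by (rule sqs_bound[OF assms, where c = "(cmod a)^2"]) (use assms sqs_C nsq_scale in auto)

lemma sqs_sub: assumes "sqs F" "sqs G" shows "sqs (\<lambda>k. hsub X (F k) (G k))"
  unfolding hsub_def by (intro sqs_add sqs_scale assms)

lemma sqs_zero: "sqs (\<lambda>k. z0)" unfolding sqs_def by simp

lemma infsum_of_real':
  assumes "f summable_on A" shows "infsum (\<lambda>x. complex_of_real (f x)) A = of_real (infsum f A)"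
  using has_sum_of_real[OF has_sum_infsum[OF assms]] by (rule infsumI)

lemma inner_self_sum:
  assumes "sqs F" shows "infsum (\<lambda>k. ip (F k) (F k)) UNIV = of_real (Nrm F)"
proof -
  have "infsum (\<lambda>k. ip (F k) (F k)) UNIV = infsum (\<lambda>k. complex_of_real (nsq (F k))) UNIV"
    using assms sqs_C inner_self_real by simp
  also have "\<dots> = of_real (Nrm F)" unfolding Nrm_def
    by (rule infsum_of_real') (use assms sqs_def in auto)
  finally show ?thesis .
qed

lemma Nrm_nonneg: "sqs F \<Longrightarrow> Nrm F \<ge> 0"
  unfolding Nrm_def by (intro infsum_nonneg) (auto simp: sqs_C)

lemma nsq_le_Nrm: assumes "sqs F" shows "nsq (F k) \<le> Nrm F"
proof -
  have "sum (\<lambda>k. nsq (F k)) {k} \<le> Nrm F" unfolding Nrm_def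
    by (rule finite_sum_le_infsum) (use assms sqs_def sqs_C in auto)
  then show ?thesis by simp
qed

lemma finsum_le_Nrm: assumes "sqs F" "finite B" shows "sum (\<lambda>k. nsq (F k)) B \<le> Nrm F"
  unfolding Nrm_def by (rule finite_sum_le_infsum) (use assms sqs_def sqs_C in auto)

lemma sqrt_nsq_rev:
  assumes "a \<in> C" "b \<in> C" "c \<in> C"
  shows "\<bar>sqrt (nsq (hsub X a b)) - sqrt (nsq (hsub X a c))\<bar> \<le> sqrt (nsq (hsub X b c))"
proof -
  have e1: "hsub X a c = pl (hsub X a b) (hsub X b c)"
    using assms by (intro vec_eqI) (simp_all add: algebra_simps)
  have e2: "hsub X a b = pl (hsub X a c) (hsub X c b)"
    using assms by (intro vec_eqI) (simp_all add: algebra_simps)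
  have "sqrt (nsq (hsub X a c)) \<le> sqrt (nsq (hsub X a b)) + sqrt (nsq (hsub X b c))"
    unfolding e1 using norm_triangle assms by simp
  moreover have "sqrt (nsq (hsub X a b)) \<le> sqrt (nsq (hsub X a c)) + sqrt (nsq (hsub X c b))"
    unfolding e2 using norm_triangle assms by simp
  moreover have "sqrt (nsq (hsub X c b)) = sqrt (nsq (hsub X b c))" using nsq_sub_sym assms by simp
  ultimately show ?thesis by linarith
qed

lemma nsq_cont:
  assumes cv: "conv h l" and hC: "\<And>q. h q \<in> C" and lC: "l \<in> C" and aC: "a \<in> C"
  shows "(\<lambda>q. nsq (hsub X a (h q))) \<longlonglongrightarrow> nsq (hsub X a l)"
proof -
  have "(\<lambda>q. sqrt (nsq (hsub X a (h q))) - sqrt (nsq (hsub X a l))) \<longlonglongrightarrow> 0"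
  proof (rule Lim_null_comparison)
    show "\<forall>\<^sub>F q in sequentially. norm (sqrt (nsq (hsub X a (h q))) - sqrt (nsq (hsub X a l))) \<le> sqrt (nsq (hsub X (h q) l))"
      using sqrt_nsq_rev[OF aC hC lC] by simp
    show "(\<lambda>q. sqrt (nsq (hsub X (h q) l))) \<longlonglongrightarrow> 0"
      using cv unfolding conv_def by (metis real_sqrt_zero tendsto_real_sqrt)
  qed
  then have "(\<lambda>q. sqrt (nsq (hsub X a (h q)))) \<longlonglongrightarrow> sqrt (nsq (hsub X a l))"
    by (simp add: LIM_zero_iff)
  then have "(\<lambda>q. (sqrt (nsq (hsub X a (h q))))^2) \<longlonglongrightarrow> (sqrt (nsq (hsub X a l)))^2"
    by (intro tendsto_power)
  then show ?thesis using aC hC lC by simp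
qed

definition l2 :: "(nat \<Rightarrow> 'a set) \<Rightarrow> (nat \<Rightarrow> 'a) hspace" where
  "l2 M = \<lparr>hcarrier = {F. (\<forall>k. F k \<in> M k) \<and> sqs F}, hzero = (\<lambda>k. z0),
     hadd = (\<lambda>F G k. pl (F k) (G k)), hscale = (\<lambda>a F k. sm a (F k)),
     hinner = (\<lambda>F G. infsum (\<lambda>k. ip (F k) (G k)) UNIV)\<rparr>"

lemma l2_simps:
  "hcarrier (l2 M) = {F. (\<forall>k. F k \<in> M k) \<and> sqs F}"
  "hzero (l2 M) = (\<lambda>k. z0)"
  "hadd (l2 M) F G = (\<lambda>k. pl (F k) (G k))"
  "hscale (l2 M) a F = (\<lambda>k. sm a (F k))"
  "hinner (l2 M) F G = infsum (\<lambda>k. ip (F k) (G k)) UNIV"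
  by (simp_all add: l2_def)

lemma l2_hsub: "hsub (l2 M) F G = (\<lambda>k. hsub X (F k) (G k))"
  by (simp add: hsub_def l2_simps)

lemma l2_hnorm: "sqs F \<Longrightarrow> hnorm (l2 M) F = sqrt (Nrm F)"
  unfolding hnorm_def l2_simps using inner_self_sum by simp

lemma l2_complete:
  assumes cM: "\<And>k. closed_sub (M k)"
    and f: "\<forall>p. f p \<in> hcarrier (l2 M)"
    and cauchy: "\<forall>e>0. \<exists>N. \<forall>m\<ge>N. \<forall>k\<ge>N. hnorm (l2 M) (hsub (l2 M) (f m) (f k)) < e"
  shows "\<exists>l\<in>hcarrier (l2 M). (\<lambda>k. hnorm (l2 M) (hsub (l2 M) (f k) l)) \<longlonglongrightarrow> 0"
proof -
  have fs: "sqs (f p)" for p using f l2_simps by auto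
  have fM: "f p k \<in> M k" for p k using f l2_simps by auto
  have fC: "f p k \<in> C" for p k using fs sqs_C by blast
  define d where "d p q = (\<lambda>k. hsub X (f p k) (f q k))" for p q
  have ds: "sqs (d p q)" for p q unfolding d_def by (intro sqs_sub fs)
  have cN: "\<exists>N. \<forall>p\<ge>N. \<forall>q\<ge>N. Nrm (d p q) < e" if e: "e > 0" for e
  proof -
    have "sqrt e > 0" using e by simp
    then obtain N where N: "\<forall>m\<ge>N. \<forall>k\<ge>N. hnorm (l2 M) (hsub (l2 M) (f m) (f k)) < sqrt e"
      using cauchy[rule_format, of "sqrt e"] by blast
    show ?thesis
    proof (intro exI allI impI)
      fix p q assume "p \<ge> N" "q \<ge> N"
      then have "hnorm (l2 M) (hsub (l2 M) (f p) (f q)) < sqrt e" using N by blast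
      moreover have "hsub (l2 M) (f p) (f q) = d p q" unfolding l2_hsub d_def by simp
      ultimately have "sqrt (Nrm (d p q)) < sqrt e" using l2_hnorm[OF ds, of M p q] by simp
      then show "Nrm (d p q) < e" by simp
    qed
  qed
  have "\<exists>l. l \<in> C \<and> conv (\<lambda>p. f p k) l" for k
  proof -
    have "\<exists>l\<in>C. conv (\<lambda>p. f p k) l"
    proof (rule complete')
      show "f p k \<in> C" for p by (rule fC)
      fix e :: real assume "e > 0"
      then obtain N where N: "\<forall>p\<ge>N. \<forall>q\<ge>N. Nrm (d p q) < e" using cN by blast
      show "\<exists>N. \<forall>m\<ge>N. \<forall>ka\<ge>N. nsq (hsub X (f m k) (f ka k)) < e"
      proof (intro exI allI impI)
        fix m q assume "m \<ge> N" "q \<ge> N"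
        then have "Nrm (d m q) < e" using N by blast
        moreover have "nsq (hsub X (f m k) (f q k)) \<le> Nrm (d m q)"
          using nsq_le_Nrm[OF ds, of m q k] unfolding d_def by simp
        ultimately show "nsq (hsub X (f m k) (f q k)) < e" by linarith
      qed
    qed
    then show ?thesis by blast
  qed
  then have "\<forall>k. \<exists>l. l \<in> C \<and> conv (\<lambda>p. f p k) l" by blast
  from choice[OF this] obtain g where g: "\<forall>k. g k \<in> C \<and> conv (\<lambda>p. f p k) (g k)" by blast
  have gC: "\<And>k. g k \<in> C" and gc: "\<And>k. conv (\<lambda>p. f p k) (g k)" using g by auto
  have gM: "g k \<in> M k" for k using closed_sub_lim[OF cM[of k], of "\<lambda>p. f p k"] fM gC gc by blast
  define r where "r p = (\<lambda>k. hsub X (f p k) (g k))" for p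
  have rC: "r p k \<in> C" for p k unfolding r_def using fC gC by simp
  have fin: "sum (\<lambda>k. nsq (r p k)) B \<le> e" if e: "e > 0" and B: "finite B" and p: "\<forall>p\<ge>N. \<forall>q\<ge>N. Nrm (d p q) < e"
     and pN: "p \<ge> N" for e B p N
  proof -
    have lim: "(\<lambda>q. sum (\<lambda>k. nsq (d p q k)) B) \<longlonglongrightarrow> sum (\<lambda>k. nsq (r p k)) B"
      unfolding d_def r_def by (intro tendsto_sum nsq_cont gc fC gC)
    show ?thesis
    proof (rule LIMSEQ_le_const2[OF lim], intro exI allI impI)
      fix q assume "q \<ge> N"
      then have "Nrm (d p q) < e" using p pN by auto
      then show "sum (\<lambda>k. nsq (d p q k)) B \<le> e" using finsum_le_Nrm[OF ds B, of p q] by linarith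
    qed
  qed
  have rsum: "sqs (r p) \<and> Nrm (r p) \<le> e" if e: "e > 0" and p: "\<forall>p\<ge>N. \<forall>q\<ge>N. Nrm (d p q) < e"
     and pN: "p \<ge> N" for e p N
  proof -
    have sm: "(\<lambda>k. nsq (r p k)) summable_on UNIV"
    proof (rule nonneg_bdd_above_summable_on)
      show "0 \<le> nsq (r p k)" for k using rC by simp
      show "bdd_above (sum (\<lambda>k. nsq (r p k)) ` {F. F \<subseteq> UNIV \<and> finite F})"
        using fin[OF e _ p pN] by (intro bdd_aboveI[of _ e]) auto
    qed
    then have "sqs (r p)" unfolding sqs_def using rC by simp
    moreover have "Nrm (r p) \<le> e" unfolding Nrm_def
      by (rule infsum_le_finite_sums[OF sm]) (use fin[OF e _ p pN] in auto)
    ultimately show ?thesis by simp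
  qed
  obtain N1 where N1: "\<forall>p\<ge>N1. \<forall>q\<ge>N1. Nrm (d p q) < 1" using cN[of 1] by auto
  have r1: "sqs (r N1)" using rsum[OF _ N1, of N1] by simp
  have geq: "g = (\<lambda>k. pl (f N1 k) (sm (-1) (r N1 k)))"
  proof
    fix k show "g k = pl (f N1 k) (sm (-1) (r N1 k))"
      unfolding r_def using fC gC by (intro vec_eqI) (simp_all add: algebra_simps)
  qed
  have gs: "sqs g" unfolding geq by (intro sqs_add sqs_scale fs r1)
  have gK: "g \<in> hcarrier (l2 M)" using gs gM l2_simps by simp
  have "(\<lambda>p. hnorm (l2 M) (hsub (l2 M) (f p) g)) \<longlonglongrightarrow> 0"
  proof (rule LIMSEQ_I)
    fix e :: real assume e: "e > 0"
    have e2: "e^2 / 2 > 0" using e by simp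
    obtain N where N: "\<forall>p\<ge>N. \<forall>q\<ge>N. Nrm (d p q) < e^2 / 2" using cN[OF e2] by blast
    show "\<exists>no. \<forall>p\<ge>no. norm (hnorm (l2 M) (hsub (l2 M) (f p) g) - 0) < e"
    proof (intro exI allI impI)
      fix p assume p: "p \<ge> N"
      have rs: "sqs (r p) \<and> Nrm (r p) \<le> e^2 / 2" using rsum[OF e2 N p] .
      have eq: "hsub (l2 M) (f p) g = r p" unfolding l2_hsub r_def by simp
      have "hnorm (l2 M) (r p) = sqrt (Nrm (r p))" using rs l2_hnorm by blast
      also have "\<dots> \<le> sqrt (e^2 / 2)" using rs by simp
      also have "\<dots> < sqrt (e^2)" using e by (intro real_sqrt_less_mono) simp
      also have "\<dots> = e" using e by simp
      finally have "hnorm (l2 M) (r p) < e" .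
      moreover have "hnorm (l2 M) (r p) \<ge> 0" using rs l2_hnorm[of "r p" M] Nrm_nonneg[of "r p"] by simp
      ultimately show "norm (hnorm (l2 M) (hsub (l2 M) (f p) g) - 0) < e" unfolding eq by simp
    qed
  qed
  then show ?thesis using gK by blast
qed

end




context hs
begin

lemma closed_sub_C: "closed_sub M \<Longrightarrow> M \<subseteq> C"
  unfolding closed_sub_def by (elim conjE) assumption
lemma closed_sub_zero: "closed_sub M \<Longrightarrow> z0 \<in> M"
  unfolding closed_sub_def by (elim conjE) assumption
lemma closed_sub_add: assumes "closed_sub M" "x \<in> M" "y \<in> M" shows "pl x y \<in> M"
proof -
  have "\<forall>x\<in>M. \<forall>y\<in>M. pl x y \<in> M" using assms(1) unfolding closed_sub_def by (elim conjE) assumption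
  then show ?thesis using assms by blast
qed
lemma closed_sub_scale: assumes "closed_sub M" "x \<in> M" shows "sm a x \<in> M"
proof -
  have "\<forall>a. \<forall>x\<in>M. sm a x \<in> M" using assms(1) unfolding closed_sub_def by (elim conjE) assumption
  then show ?thesis using assms by blast
qed

lemma l2_hilbert:
  assumes cM: "\<And>k. closed_sub (M k)"
  shows "hilbert_space (l2 M)"
proof -
  let ?K = "hcarrier (l2 M)"
  have KC: "F \<in> ?K \<Longrightarrow> F k \<in> C" for F k using sqs_C by (auto simp: l2_simps)
  have Ks: "F \<in> ?K \<Longrightarrow> sqs F" for F by (auto simp: l2_simps)
  have KM: "F \<in> ?K \<Longrightarrow> F k \<in> M k" for F k by (auto simp: l2_simps)
  have c1: "hzero (l2 M) \<in> ?K" using closed_sub_zero[OF cM] sqs_zero by (simp add: l2_simps)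
  have c2: "\<forall>x\<in>?K. \<forall>y\<in>?K. hadd (l2 M) x y \<in> ?K"
    using closed_sub_add[OF cM] sqs_add by (auto simp: l2_simps)
  have c3: "\<forall>a. \<forall>x\<in>?K. hscale (l2 M) a x \<in> ?K"
    using closed_sub_scale[OF cM] sqs_scale by (auto simp: l2_simps)
  have c4: "\<forall>x\<in>?K. \<forall>y\<in>?K. \<forall>z\<in>?K. hadd (l2 M) (hadd (l2 M) x y) z = hadd (l2 M) x (hadd (l2 M) y z)"
    using KC add_assoc by (auto simp: l2_simps)
  have c5: "\<forall>x\<in>?K. \<forall>y\<in>?K. hadd (l2 M) x y = hadd (l2 M) y x"
    using KC add_comm by (auto simp: l2_simps)
  have c6: "\<forall>x\<in>?K. hadd (l2 M) x (hzero (l2 M)) = x"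
    using KC by (auto simp: l2_simps)
  have c7: "\<forall>x\<in>?K. hadd (l2 M) x (hscale (l2 M) (-1) x) = hzero (l2 M)"
    using KC add_neg by (auto simp: l2_simps)
  have c8: "\<forall>a b. \<forall>x\<in>?K. hscale (l2 M) a (hscale (l2 M) b x) = hscale (l2 M) (a * b) x"
    using KC by (auto simp: l2_simps)
  have c9: "\<forall>x\<in>?K. hscale (l2 M) 1 x = x"
    using KC by (auto simp: l2_simps)
  have c10: "\<forall>a. \<forall>x\<in>?K. \<forall>y\<in>?K. hscale (l2 M) a (hadd (l2 M) x y) = hadd (l2 M) (hscale (l2 M) a x) (hscale (l2 M) a y)"
    using KC scale_add_right by (auto simp: l2_simps)
  have c11: "\<forall>a b. \<forall>x\<in>?K. hscale (l2 M) (a + b) x = hadd (l2 M) (hscale (l2 M) a x) (hscale (l2 M) b x)"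
    using KC scale_add_left by (auto simp: l2_simps)
  have c12: "\<forall>x\<in>?K. \<forall>y\<in>?K. hinner (l2 M) x y = cnj (hinner (l2 M) y x)"
  proof (intro ballI)
    fix x y assume xy: "x \<in> ?K" "y \<in> ?K"
    have "(\<lambda>k. ip (x k) (y k)) = (\<lambda>k. cnj (ip (y k) (x k)))" using xy KC inner_sym by blast
    then show "hinner (l2 M) x y = cnj (hinner (l2 M) y x)" by (simp add: l2_simps)
  qed
  have c13: "\<forall>x\<in>?K. \<forall>y\<in>?K. \<forall>z\<in>?K. hinner (l2 M) (hadd (l2 M) x y) z = hinner (l2 M) x z + hinner (l2 M) y z"
  proof (intro ballI)
    fix x y w assume xy: "x \<in> ?K" "y \<in> ?K" "w \<in> ?K"
    have "(\<lambda>k. ip (pl (x k) (y k)) (w k)) = (\<lambda>k. ip (x k) (w k) + ip (y k) (w k))" using xy KC by simp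
    then have "hinner (l2 M) (hadd (l2 M) x y) w = infsum (\<lambda>k. ip (x k) (w k) + ip (y k) (w k)) UNIV"
      unfolding l2_simps by simp
    also have "\<dots> = infsum (\<lambda>k. ip (x k) (w k)) UNIV + infsum (\<lambda>k. ip (y k) (w k)) UNIV"
      by (rule infsum_add; rule sqs_inner_summable; rule Ks; fact)
    finally show "hinner (l2 M) (hadd (l2 M) x y) w = hinner (l2 M) x w + hinner (l2 M) y w"
      unfolding l2_simps .
  qed
  have c14: "\<forall>a. \<forall>x\<in>?K. \<forall>y\<in>?K. hinner (l2 M) (hscale (l2 M) a x) y = a * hinner (l2 M) x y"
  proof (intro allI ballI)
    fix a x y assume xy: "x \<in> ?K" "y \<in> ?K"
    have "(\<lambda>k. ip (sm a (x k)) (y k)) = (\<lambda>k. a * ip (x k) (y k))" using xy KC by simp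
    then have "hinner (l2 M) (hscale (l2 M) a x) y = infsum (\<lambda>k. a * ip (x k) (y k)) UNIV"
      unfolding l2_simps by simp
    also have "\<dots> = a * infsum (\<lambda>k. ip (x k) (y k)) UNIV"
      by (rule infsum_cmult_right) (use sqs_inner_summable[OF Ks[OF xy(1)] Ks[OF xy(2)]] in blast)
    finally show "hinner (l2 M) (hscale (l2 M) a x) y = a * hinner (l2 M) x y"
      unfolding l2_simps .
  qed
  have c15: "\<forall>x\<in>?K. Im (hinner (l2 M) x x) = 0 \<and> Re (hinner (l2 M) x x) \<ge> 0"
  proof
    fix x assume x: "x \<in> ?K"
    have "hinner (l2 M) x x = of_real (Nrm x)" unfolding l2_simps by (rule inner_self_sum[OF Ks[OF x]])
    then show "Im (hinner (l2 M) x x) = 0 \<and> Re (hinner (l2 M) x x) \<ge> 0"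
      using Nrm_nonneg[OF Ks[OF x]] by simp
  qed
  have c16: "\<forall>x\<in>?K. hinner (l2 M) x x = 0 \<longrightarrow> x = hzero (l2 M)"
  proof (intro ballI impI)
    fix x assume x: "x \<in> ?K" and z: "hinner (l2 M) x x = 0"
    have "hinner (l2 M) x x = of_real (Nrm x)" unfolding l2_simps by (rule inner_self_sum[OF Ks[OF x]])
    then have "Nrm x = 0" using z by simp
    have "nsq (x k) = 0" for k
    proof -
      have "nsq (x k) \<le> 0" using nsq_le_Nrm[OF Ks[OF x], of k] \<open>Nrm x = 0\<close> by simp
      then show ?thesis using nsq_nonneg[OF KC[OF x, of k]] by linarith
    qed
    then have "x k = z0" for k using KC[OF x] nsq_zero_iff by blast
    then show "x = hzero (l2 M)" unfolding l2_simps by (intro ext) simp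
  qed
  have c17: "\<forall>f::nat \<Rightarrow> (nat \<Rightarrow> 'a). (\<forall>k. f k \<in> ?K) \<longrightarrow>
          (\<forall>e>0. \<exists>N. \<forall>m\<ge>N. \<forall>k\<ge>N. hnorm (l2 M) (hsub (l2 M) (f m) (f k)) < e) \<longrightarrow>
          (\<exists>l\<in>?K. (\<lambda>k. hnorm (l2 M) (hsub (l2 M) (f k) l)) \<longlonglongrightarrow> 0)"
  proof (intro allI impI)
    fix f :: "nat \<Rightarrow> nat \<Rightarrow> 'a"
    assume "\<forall>k. f k \<in> ?K" "\<forall>e>0. \<exists>N. \<forall>m\<ge>N. \<forall>k\<ge>N. hnorm (l2 M) (hsub (l2 M) (f m) (f k)) < e"
    then show "\<exists>l\<in>?K. (\<lambda>k. hnorm (l2 M) (hsub (l2 M) (f k) l)) \<longlonglongrightarrow> 0"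
      by (rule l2_complete[OF cM])
  qed
  show ?thesis unfolding hilbert_space_def Let_def
    using c1 c2 c3 c4 c5 c6 c7 c8 c9 c10 c11 c12 c13 c14 c15 c16 c17 by (intro conjI)
qed

end




locale dnc = hs X for X :: "'a hspace" +
  fixes n :: nat and z :: "nat \<Rightarrow> nat \<Rightarrow> complex" and V :: "nat \<Rightarrow> 'a \<Rightarrow> 'a"
  assumes n1: "n \<ge> 1"
    and zabs: "\<And>i j. i \<in> {1..n} \<Longrightarrow> j \<in> {1..n} \<Longrightarrow> i \<noteq> j \<Longrightarrow> cmod (z i j) = 1"
    and zsym: "\<And>i j. i \<in> {1..n} \<Longrightarrow> j \<in> {1..n} \<Longrightarrow> i \<noteq> j \<Longrightarrow> z j i = cnj (z i j)"
    and dnc: "doubly_noncommuting X n z V"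
begin

abbreviation "I \<equiv> {1..n}"
abbreviation "A i \<equiv> adj X (V i)"

lemma dnc_parts1: "(\<forall>i\<in>I. isometry_op X (V i))"
  using dnc unfolding doubly_noncommuting_def by (elim conjE)
lemma dnc_parts2: "(\<forall>i\<in>I. \<forall>j\<in>I. i \<noteq> j \<longrightarrow>
        (\<forall>x\<in>C. A i (V j x) = sm (cnj (z i j)) (V j (A i x))))"
  using dnc unfolding doubly_noncommuting_def by (elim conjE)
lemmas dnc_parts = dnc_parts1 dnc_parts2

lemma V_iso_op: "i \<in> I \<Longrightarrow> isometry_op X (V i)"
  using dnc_parts(1) by blast

lemma V_bounded: assumes "i \<in> I" shows "bounded_op X (V i)"
  using V_iso_op[OF assms] unfolding isometry_op_def by (elim conjE)

lemma V_bparts1: assumes "i \<in> I" shows "\<forall>x\<in>C. V i x \<in> C"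
  using V_bounded[OF assms] unfolding bounded_op_def by (elim conjE)
lemma V_bparts2: assumes "i \<in> I" shows "\<forall>x\<in>C. \<forall>y\<in>C. V i (pl x y) = pl (V i x) (V i y)"
  using V_bounded[OF assms] unfolding bounded_op_def by (elim conjE)
lemma V_bparts3: assumes "i \<in> I" shows "\<forall>a. \<forall>x\<in>C. V i (sm a x) = sm a (V i x)"
  using V_bounded[OF assms] unfolding bounded_op_def by (elim conjE)
lemmas V_bparts = V_bparts1 V_bparts2 V_bparts3

lemma V_C[simp]: "i \<in> I \<Longrightarrow> x \<in> C \<Longrightarrow> V i x \<in> C"
  using V_bparts(1) by blast
lemma V_add[simp]: "i \<in> I \<Longrightarrow> x \<in> C \<Longrightarrow> y \<in> C \<Longrightarrow> V i (pl x y) = pl (V i x) (V i y)"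
  using V_bparts(2) by blast
lemma V_sc[simp]: "i \<in> I \<Longrightarrow> x \<in> C \<Longrightarrow> V i (sm a x) = sm a (V i x)"
  using V_bparts(3) by blast
lemma V_zero[simp]: "i \<in> I \<Longrightarrow> V i z0 = z0"
  using V_sc[of i z0 0] by simp

lemma A_ex: "i \<in> I \<Longrightarrow> y \<in> C \<Longrightarrow> A i y \<in> C \<and> (\<forall>x\<in>C. ip (V i x) y = ip x (A i y))"
  by (rule adj_exists[OF V_bounded])
lemma A_C[simp]: "i \<in> I \<Longrightarrow> y \<in> C \<Longrightarrow> A i y \<in> C"
  using A_ex by blast
lemma A_adj: "i \<in> I \<Longrightarrow> x \<in> C \<Longrightarrow> y \<in> C \<Longrightarrow> ip (V i x) y = ip x (A i y)"
  using A_ex by blast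
lemma A_adj': assumes "i \<in> I" "x \<in> C" "y \<in> C" shows "ip y (V i x) = ip (A i y) x"
proof -
  have "ip y (V i x) = cnj (ip (V i x) y)" using inner_sym[of y "V i x"] assms by simp
  also have "\<dots> = cnj (ip x (A i y))" using A_adj assms by simp
  also have "\<dots> = ip (A i y) x" using inner_sym[of "A i y" x] assms by simp
  finally show ?thesis .
qed
lemma A_V[simp]: "i \<in> I \<Longrightarrow> x \<in> C \<Longrightarrow> A i (V i x) = x"
  using V_iso_op unfolding isometry_op_def by blast
lemma V_iso: "i \<in> I \<Longrightarrow> x \<in> C \<Longrightarrow> y \<in> C \<Longrightarrow> ip (V i x) (V i y) = ip x y"
  using A_adj[of i x "V i y"] by simp

lemma A_add[simp]: assumes "i \<in> I" "x \<in> C" "y \<in> C" shows "A i (pl x y) = pl (A i x) (A i y)"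
  by (rule adj_unique) (use assms A_adj in simp_all)
lemma A_sc[simp]: assumes "i \<in> I" "x \<in> C" shows "A i (sm a x) = sm a (A i x)"
  by (rule adj_unique) (use assms A_adj in simp_all)
lemma A_zero[simp]: "i \<in> I \<Longrightarrow> A i z0 = z0"
  using A_sc[of i z0 0] by simp

lemma z_nz: "i \<in> I \<Longrightarrow> j \<in> I \<Longrightarrow> i \<noteq> j \<Longrightarrow> z i j \<noteq> 0"
  using zabs[of i j] by auto
lemma cnj_z: "i \<in> I \<Longrightarrow> j \<in> I \<Longrightarrow> i \<noteq> j \<Longrightarrow> cnj (z i j) = 1 / z i j"
proof -
  assume a: "i \<in> I" "j \<in> I" "i \<noteq> j"
  have "z i j * cnj (z i j) = 1" using zabs[OF a] complex_norm_square[of "z i j"] by simp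
  then show ?thesis using z_nz[OF a] by (simp add: field_simps)
qed
lemma z_swap: "i \<in> I \<Longrightarrow> j \<in> I \<Longrightarrow> i \<noteq> j \<Longrightarrow> z j i = 1 / z i j"
  using zsym[of i j] cnj_z[of i j] by simp

lemma A_rel0: "i \<in> I \<Longrightarrow> j \<in> I \<Longrightarrow> i \<noteq> j \<Longrightarrow> x \<in> C \<Longrightarrow> A i (V j x) = sm (cnj (z i j)) (V j (A i x))"
  using dnc_parts(2) by blast
lemma A_rel[simp]: "i \<in> I \<Longrightarrow> j \<in> I \<Longrightarrow> i \<noteq> j \<Longrightarrow> x \<in> C \<Longrightarrow> A i (V j x) = sm (1 / z i j) (V j (A i x))"
  using A_rel0[of i j x] cnj_z[of i j] by simp

lemma nsq_V[simp]: "i \<in> I \<Longrightarrow> x \<in> C \<Longrightarrow> nsq (V i x) = nsq x"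
  unfolding nsq_def using V_iso by simp

lemma V_comm: assumes ij: "i \<in> I" "j \<in> I" "i \<noteq> j" and x: "x \<in> C"
  shows "V i (V j x) = sm (z i j) (V j (V i x))"
proof -
  let ?u = "V i (V j x)" and ?w = "V j (V i x)"
  have uw: "ip ?u ?w = z i j * ip x x"
  proof -
    have "ip ?u ?w = ip (V j x) (A i ?w)" using A_adj ij x by simp
    also have "\<dots> = ip (V j x) (sm (1 / z i j) (V j x))" using ij x by simp
    also have "\<dots> = cnj (1 / z i j) * ip x x" using ij x V_iso by simp
    also have "cnj (1 / z i j) = z i j" using cnj_z[OF ij] by (metis complex_cnj_cnj complex_cnj_divide complex_cnj_one)
    finally show ?thesis .
  qed
  have wu: "ip ?w ?u = cnj (z i j) * ip x x"
    using uw inner_sym[of ?w ?u] ij x inner_self_real[OF x] by simp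
  have zz: "z i j * cnj (z i j) = 1" using zabs[OF ij] complex_norm_square[of "z i j"] by simp
  have "ip (hsub X ?u (sm (z i j) ?w)) (hsub X ?u (sm (z i j) ?w))
      = ip ?u ?u - cnj (z i j) * ip ?u ?w - z i j * ip ?w ?u + z i j * cnj (z i j) * ip ?w ?w"
    using ij x by (simp add: algebra_simps)
  also have "\<dots> = 0" unfolding uw wu using ij x V_iso zz by (simp add: algebra_simps)
  finally have "hsub X ?u (sm (z i j) ?w) = z0" using ij x inner_zero_eq by simp
  then show ?thesis using eq_if_sub_zero ij x by simp
qed

lemma A_comm: assumes ij: "i \<in> I" "k \<in> I" "i \<noteq> k" and w: "w \<in> C"
  shows "A k (A i w) = sm (1 / z i k) (A i (A k w))"
proof (rule adj_unique)
  show "sm (1 / z i k) (A i (A k w)) \<in> C" using ij w by simp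
  fix x assume x: "x \<in> C"
  have "ip (V k x) (A i w) = ip (V i (V k x)) w" using A_adj ij x w by simp
  also have "\<dots> = z i k * ip (V k (V i x)) w" using V_comm[OF ij x] ij x w by simp
  also have "\<dots> = z i k * ip x (A i (A k w))" using A_adj ij x w by simp
  also have "\<dots> = ip x (sm (1 / z i k) (A i (A k w)))"
    using ij x w cnj_z[OF ij] by simp
  finally show "ip (V k x) (A i w) = ip x (sm (1 / z i k) (A i (A k w)))" .
qed

lemma nsq_A: assumes "i \<in> I" "y \<in> C" shows "nsq (A i y) \<le> nsq y"
proof -
  have "nsq (A i y) = Re (ip (V i (A i y)) y)" unfolding nsq_def using A_adj assms by simp
  also have "\<dots> \<le> cmod (ip (V i (A i y)) y)" by (rule complex_Re_le_cmod)
  also have "\<dots> \<le> sqrt (nsq (A i y)) * sqrt (nsq y)" using cs_norm[of "V i (A i y)" y] assms by simp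
  finally have *: "nsq (A i y) \<le> sqrt (nsq (A i y)) * sqrt (nsq y)" .
  show ?thesis
  proof (cases "nsq (A i y) = 0")
    case True then show ?thesis using assms by simp
  next
    case False
    have "nsq (A i y) \<ge> 0" using assms by simp
    then have p: "sqrt (nsq (A i y)) > 0" using False by simp
    have "sqrt (nsq (A i y)) * sqrt (nsq (A i y)) = nsq (A i y)" using \<open>nsq (A i y) \<ge> 0\<close> by simp
    then have "sqrt (nsq (A i y)) * sqrt (nsq (A i y)) \<le> sqrt (nsq (A i y)) * sqrt (nsq y)"
      using * by linarith
    then have "sqrt (nsq (A i y)) \<le> sqrt (nsq y)" using p mult_le_cancel_left_pos by blast
    then show ?thesis using assms by simp
  qed
qed

definition D :: "nat \<Rightarrow> 'a \<Rightarrow> 'a" where "D i y = hsub X y (V i (A i y))"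

lemma D_C[simp]: "i \<in> I \<Longrightarrow> y \<in> C \<Longrightarrow> D i y \<in> C" by (simp add: D_def)
lemma D_add[simp]: "i \<in> I \<Longrightarrow> x \<in> C \<Longrightarrow> y \<in> C \<Longrightarrow> D i (pl x y) = pl (D i x) (D i y)"
  unfolding D_def by (intro vec_eqI) (simp_all add: algebra_simps)
lemma D_sc[simp]: "i \<in> I \<Longrightarrow> x \<in> C \<Longrightarrow> D i (sm a x) = sm a (D i x)"
  unfolding D_def by (intro vec_eqI) (simp_all add: algebra_simps)
lemma A_D[simp]: "i \<in> I \<Longrightarrow> y \<in> C \<Longrightarrow> A i (D i y) = z0"
  unfolding D_def hsub_def by (simp add: add_neg)
lemma D_fix: "i \<in> I \<Longrightarrow> w \<in> C \<Longrightarrow> A i w = z0 \<Longrightarrow> D i w = w"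
  unfolding D_def hsub_def by simp
lemma D_V[simp]: "i \<in> I \<Longrightarrow> x \<in> C \<Longrightarrow> D i (V i x) = z0"
  unfolding D_def by simp
lemma ip_V_ker: "i \<in> I \<Longrightarrow> w \<in> C \<Longrightarrow> u \<in> C \<Longrightarrow> A i w = z0 \<Longrightarrow> ip w (V i u) = 0"
  using A_adj' by simp
lemma ip_D: assumes "i \<in> I" "w \<in> C" "g \<in> C" "A i w = z0" shows "ip w (D i g) = ip w g"
  unfolding D_def using assms ip_V_ker by simp
lemma D_V_comm[simp]: assumes "i \<in> I" "j \<in> I" "i \<noteq> j" "x \<in> C" shows "D i (V j x) = V j (D i x)"
proof -
  have "V i (sm (1 / z i j) (V j (A i x))) = V j (V i (A i x))"
    using assms V_comm[of i j "A i x"] z_nz[of i j] by simp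
  then show ?thesis unfolding D_def hsub_def using assms by simp
qed
lemma nsq_D: assumes "i \<in> I" "y \<in> C" shows "nsq (D i y) \<le> nsq y"
proof -
  have e: "pl (D i y) (V i (A i y)) = y" unfolding D_def using assms
    by (intro vec_eqI) (simp_all add: algebra_simps)
  have "ip (D i y) (V i (A i y)) = 0" using assms ip_V_ker by simp
  then have "nsq (pl (D i y) (V i (A i y))) = nsq (D i y) + nsq (V i (A i y))" using nsq_add[of "D i y" "V i (A i y)"] assms by simp
  then have "nsq y = nsq (D i y) + nsq (V i (A i y))" unfolding e .
  then show ?thesis using assms nsq_nonneg[of "V i (A i y)"] by simp
qed

definition W :: "nat set \<Rightarrow> 'a set" where "W S = {w \<in> C. \<forall>j\<in>S. A j w = z0}"

lemma W_C: "w \<in> W S \<Longrightarrow> w \<in> C" unfolding W_def by simp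
lemma W_A: "w \<in> W S \<Longrightarrow> j \<in> S \<Longrightarrow> A j w = z0" unfolding W_def by simp
lemma W_mono: "S \<subseteq> S' \<Longrightarrow> w \<in> W S' \<Longrightarrow> w \<in> W S" unfolding W_def by auto

lemma W_closed: assumes "S \<subseteq> I" shows "closed_sub (W S)"
  unfolding closed_sub_def
proof (intro conjI ballI allI impI)
  show "W S \<subseteq> C" unfolding W_def by auto
  show "z0 \<in> W S" unfolding W_def using assms by auto
  show "pl x y \<in> W S" if "x \<in> W S" "y \<in> W S" for x y using that assms unfolding W_def by auto
  show "sm a x \<in> W S" if "x \<in> W S" for a x using that assms unfolding W_def by auto
  fix f l assume f: "\<forall>k. f k \<in> W S" and l: "l \<in> C" and cv: "conv f l"
  have "A j l = z0" if j: "j \<in> S" for j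
  proof -
    have jI: "j \<in> I" using j assms by auto
    have fC: "f k \<in> C" for k using f W_def by auto
    have "nsq (A j l) \<le> nsq (hsub X (f k) l)" for k
    proof -
      have "A j l = sm (-1) (A j (hsub X (f k) l))"
        using f j jI fC l unfolding W_def hsub_def by simp
      then have "nsq (A j l) = nsq (A j (hsub X (f k) l))" using nsq_scale jI fC l by simp
      also have "\<dots> \<le> nsq (hsub X (f k) l)" using nsq_A jI fC l by simp
      finally show ?thesis .
    qed
    then have "nsq (A j l) \<le> 0" using cv unfolding conv_def by (intro LIMSEQ_le_const[of _ 0]) auto
    moreover have "nsq (A j l) \<ge> 0" using jI l by simp
    ultimately have "nsq (A j l) = 0" by linarith
    then show ?thesis using nsq_zero_iff[of "A j l"] jI l by simp
  qed
  then show "l \<in> W S" using l W_def by simp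
qed

lemma V_W: assumes "i \<in> I" "S \<subseteq> I" "i \<notin> S" "w \<in> W S" shows "V i w \<in> W S"
proof -
  have wC: "w \<in> C" using assms W_C by blast
  have "A j (V i w) = z0" if j: "j \<in> S" for j
  proof -
    have "j \<in> I" "j \<noteq> i" using j assms by auto
    then show ?thesis using assms wC W_A[OF assms(4) j] by simp
  qed
  then show ?thesis unfolding W_def using assms wC by simp
qed

lemma A_W: assumes "i \<in> I" "S \<subseteq> I" "i \<notin> S" "w \<in> W S" shows "A i w \<in> W S"
proof -
  have wC: "w \<in> C" using assms W_C by blast
  have "A j (A i w) = z0" if j: "j \<in> S" for j
  proof -
    have "j \<in> I" "j \<noteq> i" using j assms by auto
    then show ?thesis using assms wC W_A[OF assms(4) j] A_comm[of i j w] by simp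
  qed
  then show ?thesis unfolding W_def using assms wC by simp
qed

lemma D_W: assumes "i \<in> I" "S \<subseteq> I" "w \<in> W S" shows "D i w \<in> W (insert i S)"
proof -
  have wC: "w \<in> C" using assms W_C by blast
  have "A j (D i w) = z0" if j: "j \<in> insert i S" for j
  proof (cases "j = i")
    case True then show ?thesis using assms wC by simp
  next
    case False
    then have jS: "j \<in> S" "j \<in> I" using j assms by auto
    have "A j (A i w) = z0" using A_comm[of i j w] False jS assms wC W_A[OF assms(3) jS(1)] by simp
    then have "A j (V i (A i w)) = z0" using False jS assms wC by simp
    then show ?thesis unfolding D_def hsub_def using jS assms wC W_A[OF assms(3) jS(1)] by simp
  qed
  then show ?thesis unfolding W_def using assms wC by simp
qed

end




context hs
begin

lemma sqs_pull:
  assumes inj: "inj_on g B" and G: "sqs G" and HC: "\<And>k. H k \<in> C"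
    and out: "\<And>k. k \<notin> B \<Longrightarrow> H k = z0" and le: "\<And>k. k \<in> B \<Longrightarrow> nsq (H k) \<le> nsq (G (g k))"
  shows "sqs H"
proof -
  have "(\<lambda>x. nsq (G x)) summable_on g ` B"
    using G unfolding sqs_def by (auto intro: summable_on_subset_banach)
  then have "(\<lambda>k. nsq (G (g k))) summable_on B"
    using summable_on_reindex[OF inj, of "\<lambda>x. nsq (G x)"] by (simp add: comp_def)
  then have s: "(\<lambda>k. nsq (H k)) summable_on B"
    by (rule summable_on_comparison_test) (use le HC in auto)
  have "(\<lambda>k. nsq (H k)) summable_on UNIV"
    using s by (subst summable_on_cong_neutral[where g = "\<lambda>k. nsq (H k)" and T = B]) (auto simp: out)
  then show ?thesis unfolding sqs_def using HC by simp
qed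

end

context dnc
begin

definition Idx :: "(nat \<Rightarrow> nat) set" where "Idx = {m. \<forall>k. k \<notin> I \<longrightarrow> m k = 0}"

lemma Idx_countable: "countable Idx"
proof -
  define f :: "nat list \<Rightarrow> nat \<Rightarrow> nat" where "f l = (\<lambda>k. if k \<in> I then l ! (k - 1) else 0)" for l
  have "Idx \<subseteq> range f"
  proof
    fix m assume m: "m \<in> Idx"
    have "m = f (map m [1..<n+1])"
    proof
      fix k show "m k = f (map m [1..<n+1]) k"
        using m unfolding f_def Idx_def by (cases "k \<in> I") (auto simp del: upt_Suc simp add: nth_map nth_upt)
    qed
    then show "m \<in> range f" by blast
  qed
  moreover have "countable (range f)" by simp
  ultimately show ?thesis by (rule countable_subset)
qed

lemma Idx_infinite: "infinite Idx"
proof -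
  define g :: "nat \<Rightarrow> nat \<Rightarrow> nat" where "g t = (\<lambda>k. if k = 1 then t else 0)" for t
  have "inj g"
  proof (rule injI)
    fix x y assume "g x = g y"
    then have "g x 1 = g y 1" by simp
    then show "x = y" unfolding g_def by simp
  qed
  then have "infinite (range g)" by (rule range_inj_infinite)
  moreover have "range g \<subseteq> Idx" unfolding g_def Idx_def using n1 by auto
  ultimately show ?thesis using infinite_super by blast
qed

definition e :: "nat \<Rightarrow> nat \<Rightarrow> nat" where "e = from_nat_into Idx"
definition d :: "(nat \<Rightarrow> nat) \<Rightarrow> nat" where "d = inv_into UNIV e"

lemma e_bij: "bij_betw e UNIV Idx"
  unfolding e_def using bij_betw_from_nat_into[OF Idx_countable Idx_infinite] .

lemma e_in: "e k \<in> Idx" using e_bij bij_betwE by blast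
lemma e_inj: "inj e" using e_bij bij_betw_def by blast
lemma d_e[simp]: "d (e k) = k" unfolding d_def using e_inj by simp
lemma e_d[simp]: "m \<in> Idx \<Longrightarrow> e (d m) = m" unfolding d_def
  by (rule bij_betw_inv_into_right[OF e_bij])
lemma e_out: "k' \<notin> I \<Longrightarrow> e k k' = 0" using e_in unfolding Idx_def by blast

definition inc :: "nat \<Rightarrow> (nat \<Rightarrow> nat) \<Rightarrow> nat \<Rightarrow> nat" where "inc i m = m(i := Suc (m i))"
definition dec :: "nat \<Rightarrow> (nat \<Rightarrow> nat) \<Rightarrow> nat \<Rightarrow> nat" where "dec i m = m(i := m i - 1)"

lemma inc_Idx: "i \<in> I \<Longrightarrow> m \<in> Idx \<Longrightarrow> inc i m \<in> Idx" unfolding inc_def Idx_def by auto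
lemma dec_Idx: "i \<in> I \<Longrightarrow> m \<in> Idx \<Longrightarrow> dec i m \<in> Idx" unfolding dec_def Idx_def by auto

definition sg :: "nat \<Rightarrow> nat \<Rightarrow> nat" where "sg i k = d (inc i (e k))"
definition tu :: "nat \<Rightarrow> nat \<Rightarrow> nat" where "tu i k = d (dec i (e k))"

lemma e_sg[simp]: "i \<in> I \<Longrightarrow> e (sg i k) = inc i (e k)" unfolding sg_def using inc_Idx e_in by simp
lemma e_tu[simp]: "i \<in> I \<Longrightarrow> e (tu i k) = dec i (e k)" unfolding tu_def using dec_Idx e_in by simp

lemma tu_sg[simp]: "i \<in> I \<Longrightarrow> tu i (sg i k) = k"
proof -
  assume i: "i \<in> I"
  have "dec i (inc i (e k)) = e k" unfolding dec_def inc_def by auto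
  then show ?thesis unfolding tu_def using i by simp
qed

lemma sg_tu: "i \<in> I \<Longrightarrow> e k i \<noteq> 0 \<Longrightarrow> sg i (tu i k) = k"
proof -
  assume i: "i \<in> I" "e k i \<noteq> 0"
  have "inc i (dec i (e k)) = e k" unfolding dec_def inc_def using i by auto
  then show ?thesis unfolding sg_def using i by simp
qed

lemma sg_inj: assumes i: "i \<in> I" shows "inj (sg i)"
proof (rule injI)
  fix x y assume "sg i x = sg i y"
  then have "tu i (sg i x) = tu i (sg i y)" by simp
  then show "x = y" using i by simp
qed

lemma tu_inj: assumes i: "i \<in> I" shows "inj_on (tu i) {k. e k i \<noteq> 0}"
proof (rule inj_onI)
  fix x y assume "x \<in> {k. e k i \<noteq> 0}" "y \<in> {k. e k i \<noteq> 0}" "tu i x = tu i y"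
  then have "sg i (tu i x) = sg i (tu i y)" by simp
  then show "x = y" using i sg_tu \<open>x \<in> _\<close> \<open>y \<in> _\<close> by simp
qed

lemma sg_tu_comm: "i \<in> I \<Longrightarrow> j \<in> I \<Longrightarrow> i \<noteq> j \<Longrightarrow> sg j (tu i k) = tu i (sg j k)"
proof -
  assume a: "i \<in> I" "j \<in> I" "i \<noteq> j"
  have "inc j (dec i (e k)) = dec i (inc j (e k))" unfolding inc_def dec_def using a by (auto simp: fun_upd_twist)
  moreover have "sg j (tu i k) = d (inc j (dec i (e k)))" using a by (simp add: sg_def)
  moreover have "tu i (sg j k) = d (dec i (inc j (e k)))" using a by (simp add: tu_def)
  ultimately show ?thesis by simp
qed

lemma e_sg_other[simp]: "j \<in> I \<Longrightarrow> i \<noteq> j \<Longrightarrow> e (sg j k) i = e k i"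
  by (simp add: inc_def)
lemma e_sg_self[simp]: "j \<in> I \<Longrightarrow> e (sg j k) j = Suc (e k j)"
  by (simp add: inc_def)
lemma e_tu_other[simp]: "j \<in> I \<Longrightarrow> i \<noteq> j \<Longrightarrow> e (tu j k) i = e k i"
  by (simp add: dec_def)
lemma e_tu_self[simp]: "j \<in> I \<Longrightarrow> e (tu j k) j = e k j - 1"
  by (simp add: dec_def)

definition k0 :: nat where "k0 = d (\<lambda>_. 0)"
lemma e_k0[simp]: "e k0 = (\<lambda>_. 0)" unfolding k0_def by (simp add: Idx_def)
lemma sg_ne_k0: "i \<in> I \<Longrightarrow> sg i k \<noteq> k0"
  by (metis e_k0 e_sg_self nat.distinct(1))



definition al :: "nat \<Rightarrow> (nat \<Rightarrow> nat) \<Rightarrow> complex" where "al i m = (\<Prod>k\<in>{1..<i}. z k i ^ m k)"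
definition be :: "nat \<Rightarrow> (nat \<Rightarrow> nat) \<Rightarrow> complex" where "be i m = (\<Prod>k\<in>I - {i}. z k i ^ m k)"

lemma al_abs: "i \<in> I \<Longrightarrow> cmod (al i m) = 1"
  unfolding al_def prod_norm[symmetric] by (intro prod.neutral) (auto simp: norm_power zabs)
lemma be_abs: "i \<in> I \<Longrightarrow> cmod (be i m) = 1"
  unfolding be_def prod_norm[symmetric] by (intro prod.neutral) (auto simp: norm_power zabs)
lemma al_nz[simp]: "i \<in> I \<Longrightarrow> al i m \<noteq> 0"
proof - assume "i \<in> I" then have "cmod (al i m) = 1" by (rule al_abs) then show ?thesis by auto qed
lemma be_nz[simp]: "i \<in> I \<Longrightarrow> be i m \<noteq> 0"
proof - assume "i \<in> I" then have "cmod (be i m) = 1" by (rule be_abs) then show ?thesis by auto qed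

lemma cnj_unit: "cmod c = 1 \<Longrightarrow> cnj c = 1 / c"
proof -
  assume a: "cmod c = 1"
  then have "c * cnj c = 1" using complex_norm_square[of c] by simp
  moreover have "c \<noteq> 0" using a by auto
  ultimately show ?thesis by (simp add: field_simps)
qed

lemma cnj_al: "i \<in> I \<Longrightarrow> cnj (al i m) = 1 / al i m" using al_abs cnj_unit by blast
lemma cnj_be: "i \<in> I \<Longrightarrow> cnj (be i m) = 1 / be i m" using be_abs cnj_unit by blast

lemma al_upd_self: "al i (m(i := t)) = al i m"
  unfolding al_def by (intro prod.cong) auto
lemma be_upd_self: "be i (m(i := t)) = be i m"
  unfolding be_def by (intro prod.cong) auto

lemma al_inc: assumes "i \<in> I" "j \<in> I" "i \<noteq> j"
  shows "al i (inc j m) = al i m * (if j < i then z j i else 1)"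
proof (cases "j < i")
  case True
  have jin: "j \<in> {1..<i}" using True assms by auto
  have "al i (inc j m) = z j i ^ Suc (m j) * (\<Prod>k\<in>{1..<i} - {j}. z k i ^ inc j m k)"
    unfolding al_def using prod.remove[OF _ jin, of "\<lambda>k. z k i ^ inc j m k"] by (simp add: inc_def)
  also have "(\<Prod>k\<in>{1..<i} - {j}. z k i ^ inc j m k) = (\<Prod>k\<in>{1..<i} - {j}. z k i ^ m k)"
    by (intro prod.cong) (auto simp: inc_def)
  also have "al i m = z j i ^ m j * (\<Prod>k\<in>{1..<i} - {j}. z k i ^ m k)"
    unfolding al_def using prod.remove[OF _ jin, of "\<lambda>k. z k i ^ m k"] by simp
  ultimately show ?thesis using True by simp
next
  case False
  have "al i (inc j m) = al i m" unfolding al_def using False by (intro prod.cong) (auto simp: inc_def)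
  then show ?thesis using False by simp
qed

lemma be_inc: assumes "i \<in> I" "j \<in> I" "i \<noteq> j"
  shows "be i (inc j m) = be i m * z j i"
proof -
  have jin: "j \<in> I - {i}" using assms by auto
  have "be i (inc j m) = z j i ^ Suc (m j) * (\<Prod>k\<in>I - {i} - {j}. z k i ^ inc j m k)"
    unfolding be_def using prod.remove[OF _ jin, of "\<lambda>k. z k i ^ inc j m k"] by (simp add: inc_def)
  also have "(\<Prod>k\<in>I - {i} - {j}. z k i ^ inc j m k) = (\<Prod>k\<in>I - {i} - {j}. z k i ^ m k)"
    by (intro prod.cong) (auto simp: inc_def)
  also have "be i m = z j i ^ m j * (\<Prod>k\<in>I - {i} - {j}. z k i ^ m k)"
    unfolding be_def using prod.remove[OF _ jin, of "\<lambda>k. z k i ^ m k"] by simp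
  ultimately show ?thesis by simp
qed

lemma al_inc_self[simp]: "al i (inc i m) = al i m" unfolding inc_def by (rule al_upd_self)
lemma be_inc_self[simp]: "be i (inc i m) = be i m" unfolding inc_def by (rule be_upd_self)
lemma al_dec_self[simp]: "al i (dec i m) = al i m" unfolding dec_def by (rule al_upd_self)
lemma be_dec_self[simp]: "be i (dec i m) = be i m" unfolding dec_def by (rule be_upd_self)

lemma inc_dec: "m j \<noteq> 0 \<Longrightarrow> inc j (dec j m) = m" unfolding inc_def dec_def by auto

lemma al_dec: assumes "i \<in> I" "j \<in> I" "i \<noteq> j" "m j \<noteq> 0"
  shows "al i (dec j m) = al i m / (if j < i then z j i else 1)"
  using al_inc[OF assms(1-3), of "dec j m"] inc_dec[of m j, OF assms(4)] z_nz assms by auto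

lemma be_dec: assumes "i \<in> I" "j \<in> I" "i \<noteq> j" "m j \<noteq> 0"
  shows "be i (dec j m) = be i m / z j i"
  using be_inc[OF assms(1-3), of "dec j m"] inc_dec[of m j, OF assms(4)] z_nz[of j i] assms by auto

lemma al_zero[simp]: "al i (\<lambda>_. 0) = 1" unfolding al_def by simp
lemma be_zero[simp]: "be i (\<lambda>_. 0) = 1" unfolding be_def by simp

end




context dnc
begin

definition Sp :: "(nat \<Rightarrow> nat) \<Rightarrow> nat set" where "Sp m = {j \<in> I. m j \<noteq> 0}"
definition MK :: "nat \<Rightarrow> 'a set" where "MK k = W (Sp (e k))"
definition K :: "(nat \<Rightarrow> 'a) hspace" where "K = l2 MK"

lemma Sp_I: "Sp m \<subseteq> I" unfolding Sp_def by auto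

lemma K_hilbert: "hilbert_space K"
  unfolding K_def MK_def by (rule l2_hilbert) (rule W_closed[OF Sp_I])

lemma K_hs: "hs K" by (rule hs.intro[OF K_hilbert])

lemma K_carrier: "hcarrier K = {F. (\<forall>k. F k \<in> W (Sp (e k))) \<and> sqs F}"
  unfolding K_def MK_def l2_simps by simp

lemma KC[simp]: "F \<in> hcarrier K \<Longrightarrow> F k \<in> C" using K_carrier sqs_C by auto
lemma KW: "F \<in> hcarrier K \<Longrightarrow> F k \<in> W (Sp (e k))" using K_carrier by auto
lemma Ks: "F \<in> hcarrier K \<Longrightarrow> sqs F" using K_carrier by auto
lemma KA: "F \<in> hcarrier K \<Longrightarrow> i \<in> I \<Longrightarrow> e k i \<noteq> 0 \<Longrightarrow> A i (F k) = z0"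
  using KW W_A unfolding Sp_def by blast
lemma K_intro: "(\<And>k. F k \<in> W (Sp (e k))) \<Longrightarrow> sqs F \<Longrightarrow> F \<in> hcarrier K"
  using K_carrier by auto

lemma K_inner: "hinner K F G = infsum (\<lambda>k. ip (F k) (G k)) UNIV"
  unfolding K_def l2_simps by simp

definition DU :: "nat \<Rightarrow> (nat \<Rightarrow> 'a) \<Rightarrow> nat \<Rightarrow> 'a" where
  "DU i F k = (if e k i = 0 then sm (be i (e k)) (V i (F k)) else z0)"
definition SU :: "nat \<Rightarrow> (nat \<Rightarrow> 'a) \<Rightarrow> nat \<Rightarrow> 'a" where
  "SU i F k = sm (al i (e k)) (F (sg i k))"
definition U :: "nat \<Rightarrow> (nat \<Rightarrow> 'a) \<Rightarrow> nat \<Rightarrow> 'a" where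
  "U i F = (\<lambda>k. pl (DU i F k) (SU i F k))"
definition DS :: "nat \<Rightarrow> (nat \<Rightarrow> 'a) \<Rightarrow> nat \<Rightarrow> 'a" where
  "DS i G k = (if e k i = 0 then sm (1 / be i (e k)) (A i (G k)) else z0)"
definition SS :: "nat \<Rightarrow> (nat \<Rightarrow> 'a) \<Rightarrow> nat \<Rightarrow> 'a" where
  "SS i G k = (if e k i = 0 then z0 else sm (1 / al i (e k)) (D i (G (tu i k))))"
definition Us :: "nat \<Rightarrow> (nat \<Rightarrow> 'a) \<Rightarrow> nat \<Rightarrow> 'a" where
  "Us i G = (\<lambda>k. pl (DS i G k) (SS i G k))"

lemma D_zero[simp]: "i \<in> I \<Longrightarrow> D i z0 = z0" unfolding D_def by simp

lemma inc_self[simp]: "inc i m i = Suc (m i)" by (simp add: inc_def)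
lemma inc_other[simp]: "i \<noteq> j \<Longrightarrow> inc j m i = m i" by (simp add: inc_def)
lemma dec_self[simp]: "dec i m i = m i - 1" by (simp add: dec_def)
lemma dec_other[simp]: "i \<noteq> j \<Longrightarrow> dec j m i = m i" by (simp add: dec_def)

lemma al_sg[simp]: "i \<in> I \<Longrightarrow> al i (e (sg i k)) = al i (e k)" by simp
lemma be_sg[simp]: "i \<in> I \<Longrightarrow> be i (e (sg i k)) = be i (e k)" by simp
lemma al_tu[simp]: "i \<in> I \<Longrightarrow> al i (e (tu i k)) = al i (e k)" by simp
lemma be_tu[simp]: "i \<in> I \<Longrightarrow> be i (e (tu i k)) = be i (e k)" by simp

lemma cnj_inv_al[simp]: "i \<in> I \<Longrightarrow> cnj (1 / al i m) = al i m"
  using cnj_al by simp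
lemma cnj_inv_be[simp]: "i \<in> I \<Longrightarrow> cnj (1 / be i m) = be i m"
  using cnj_be by simp
lemma cmod_al[simp]: "i \<in> I \<Longrightarrow> cmod (al i m) = 1" by (rule al_abs)
lemma cmod_be[simp]: "i \<in> I \<Longrightarrow> cmod (be i m) = 1" by (rule be_abs)

lemma DU_C[simp]: "i \<in> I \<Longrightarrow> F \<in> hcarrier K \<Longrightarrow> DU i F k \<in> C" unfolding DU_def by simp
lemma SU_C[simp]: "i \<in> I \<Longrightarrow> F \<in> hcarrier K \<Longrightarrow> SU i F k \<in> C" unfolding SU_def by simp
lemma DS_C[simp]: "i \<in> I \<Longrightarrow> F \<in> hcarrier K \<Longrightarrow> DS i F k \<in> C" unfolding DS_def by simp
lemma SS_C[simp]: "i \<in> I \<Longrightarrow> F \<in> hcarrier K \<Longrightarrow> SS i F k \<in> C" unfolding SS_def by simp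

lemma sqs_DU: assumes "i \<in> I" "F \<in> hcarrier K" shows "sqs (DU i F)"
proof (rule sqs_bound[OF Ks[OF assms(2)], where c = 1])
  show "DU i F k \<in> C" for k using assms by simp
  show "nsq (DU i F k) \<le> 1 * nsq (F k)" for k
    using assms unfolding DU_def by (simp add: nsq_scale)
qed

lemma sqs_SU: assumes "i \<in> I" "F \<in> hcarrier K" shows "sqs (SU i F)"
proof (rule sqs_pull[OF _ Ks[OF assms(2)], where g = "sg i" and B = UNIV])
  show "inj_on (sg i) UNIV" using sg_inj assms by simp
  show "SU i F k \<in> C" for k using assms by simp
  show "nsq (SU i F k) \<le> nsq (F (sg i k))" for k
    using assms unfolding SU_def by (simp add: nsq_scale)
qed simp

lemma sqs_DS: assumes "i \<in> I" "F \<in> hcarrier K" shows "sqs (DS i F)"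
proof (rule sqs_bound[OF Ks[OF assms(2)], where c = 1])
  show "DS i F k \<in> C" for k using assms by simp
  show "nsq (DS i F k) \<le> 1 * nsq (F k)" for k
    using assms nsq_A[of i "F k"] unfolding DS_def by (simp add: nsq_scale norm_divide)
qed

lemma sqs_SS: assumes "i \<in> I" "F \<in> hcarrier K" shows "sqs (SS i F)"
proof (rule sqs_pull[OF _ Ks[OF assms(2)], where g = "tu i" and B = "{k. e k i \<noteq> 0}"])
  show "inj_on (tu i) {k. e k i \<noteq> 0}" using tu_inj assms by simp
  show "SS i F k \<in> C" for k using assms by simp
  show "SS i F k = z0" if "k \<notin> {k. e k i \<noteq> 0}" for k using that unfolding SS_def by simp
  show "nsq (SS i F k) \<le> nsq (F (tu i k))" if "k \<in> {k. e k i \<noteq> 0}" for k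
    using that assms nsq_D[of i "F (tu i k)"] unfolding SS_def by (simp add: nsq_scale norm_divide)
qed

lemma U_C[simp]: "i \<in> I \<Longrightarrow> F \<in> hcarrier K \<Longrightarrow> U i F k \<in> C" unfolding U_def by simp
lemma Us_C[simp]: "i \<in> I \<Longrightarrow> F \<in> hcarrier K \<Longrightarrow> Us i F k \<in> C" unfolding Us_def by simp

lemma U_K: assumes i: "i \<in> I" and F: "F \<in> hcarrier K" shows "U i F \<in> hcarrier K"
proof (rule K_intro)
  show "sqs (U i F)" unfolding U_def by (intro sqs_add sqs_DU sqs_SU i F)
  fix k
  have cl: "closed_sub (W (Sp (e k)))" by (rule W_closed[OF Sp_I])
  have "DU i F k \<in> W (Sp (e k))"
  proof (cases "e k i = 0")
    case True
    then have "i \<notin> Sp (e k)" unfolding Sp_def by simp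
    then have "V i (F k) \<in> W (Sp (e k))" using V_W[OF i Sp_I _ KW[OF F]] by simp
    then show ?thesis unfolding DU_def using True closed_sub_scale[OF cl] by simp
  next
    case False then show ?thesis unfolding DU_def using closed_sub_zero[OF cl] by simp
  qed
  moreover have "SU i F k \<in> W (Sp (e k))"
  proof -
    have "Sp (e k) \<subseteq> Sp (e (sg i k))" unfolding Sp_def using i by (auto simp: inc_def)
    then have "F (sg i k) \<in> W (Sp (e k))" using W_mono KW[OF F] by blast
    then show ?thesis unfolding SU_def using closed_sub_scale[OF cl] by simp
  qed
  ultimately show "U i F k \<in> W (Sp (e k))" unfolding U_def using closed_sub_add[OF cl] by simp
qed

lemma Us_K: assumes i: "i \<in> I" and F: "F \<in> hcarrier K" shows "Us i F \<in> hcarrier K"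
proof (rule K_intro)
  show "sqs (Us i F)" unfolding Us_def by (intro sqs_add sqs_DS sqs_SS i F)
  fix k
  have cl: "closed_sub (W (Sp (e k)))" by (rule W_closed[OF Sp_I])
  have "DS i F k \<in> W (Sp (e k))"
  proof (cases "e k i = 0")
    case True
    then have "i \<notin> Sp (e k)" unfolding Sp_def by simp
    then have "A i (F k) \<in> W (Sp (e k))" using A_W[OF i Sp_I _ KW[OF F]] by simp
    then show ?thesis unfolding DS_def using True closed_sub_scale[OF cl] by simp
  next
    case False then show ?thesis unfolding DS_def using closed_sub_zero[OF cl] by simp
  qed
  moreover have "SS i F k \<in> W (Sp (e k))"
  proof (cases "e k i = 0")
    case True then show ?thesis unfolding SS_def using closed_sub_zero[OF cl] by simp
  next
    case False
    have "D i (F (tu i k)) \<in> W (insert i (Sp (e (tu i k))))" using D_W[OF i Sp_I KW[OF F]] .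
    moreover have "Sp (e k) \<subseteq> insert i (Sp (e (tu i k)))" unfolding Sp_def using i by (auto simp: dec_def)
    ultimately have "D i (F (tu i k)) \<in> W (Sp (e k))" using W_mono by blast
    then show ?thesis unfolding SS_def using False closed_sub_scale[OF cl] by simp
  qed
  ultimately show "Us i F k \<in> W (Sp (e k))" unfolding Us_def using closed_sub_add[OF cl] by simp
qed

lemma adj_id:
  assumes i: "i \<in> I" and F: "F \<in> hcarrier K" and G: "G \<in> hcarrier K"
  shows "hinner K (U i F) G = hinner K F (Us i G)"
proof -
  have FC: "F k \<in> C" "G k \<in> C" for k using F G by auto
  have s1: "(\<lambda>k. ip (DU i F k) (G k)) summable_on UNIV" by (intro sqs_inner_summable sqs_DU Ks i F G)
  have s2: "(\<lambda>k. ip (SU i F k) (G k)) summable_on UNIV" by (intro sqs_inner_summable sqs_SU Ks i F G)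
  have s3: "(\<lambda>k. ip (F k) (DS i G k)) summable_on UNIV" by (intro sqs_inner_summable sqs_DS Ks i F G)
  have s4: "(\<lambda>k. ip (F k) (SS i G k)) summable_on UNIV" by (intro sqs_inner_summable sqs_SS Ks i F G)
  have "hinner K (U i F) G = infsum (\<lambda>k. ip (DU i F k) (G k) + ip (SU i F k) (G k)) UNIV"
    unfolding K_inner U_def using i F G by simp
  also have "\<dots> = infsum (\<lambda>k. ip (DU i F k) (G k)) UNIV + infsum (\<lambda>k. ip (SU i F k) (G k)) UNIV"
    by (rule infsum_add[OF s1 s2])
  also have "infsum (\<lambda>k. ip (DU i F k) (G k)) UNIV = infsum (\<lambda>k. ip (F k) (DS i G k)) UNIV"
  proof (rule infsum_cong)
    fix k show "ip (DU i F k) (G k) = ip (F k) (DS i G k)"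
      unfolding DU_def DS_def using i FC A_adj cnj_be by simp
  qed
  also have "infsum (\<lambda>k. ip (SU i F k) (G k)) UNIV = infsum (\<lambda>k. ip (F k) (SS i G k)) UNIV"
  proof -
    define q where "q k = ip (F k) (SS i G k)" for k
    have qs: "q (sg i k) = ip (SU i F k) (G k)" for k
    proof -
      have A0: "A i (F (sg i k)) = z0" using KA[OF F i] i by simp
      have "q (sg i k) = ip (F (sg i k)) (sm (1 / al i (e k)) (D i (G k)))"
        unfolding q_def SS_def using i by simp
      also have "\<dots> = al i (e k) * ip (F (sg i k)) (G k)"
        using i FC ip_D[OF i _ _ A0] cnj_al by simp
      also have "\<dots> = ip (SU i F k) (G k)" unfolding SU_def using i FC by simp
      finally show ?thesis .
    qed
    have "infsum (\<lambda>k. ip (SU i F k) (G k)) UNIV = infsum (q \<circ> sg i) UNIV"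
      unfolding comp_def qs ..
    also have "\<dots> = infsum q (range (sg i))"
      by (rule infsum_reindex[symmetric]) (use sg_inj i in simp)
    also have "\<dots> = infsum q UNIV"
    proof (rule infsum_cong_neutral)
      fix k assume "k \<in> UNIV - range (sg i)"
      then have "e k i = 0" using sg_tu[OF i, of k] by (metis DiffD2 rangeI)
      then show "q k = 0" unfolding q_def SS_def using FC by simp
    qed auto
    finally show ?thesis unfolding q_def .
  qed
  also have "infsum (\<lambda>k. ip (F k) (DS i G k)) UNIV + infsum (\<lambda>k. ip (F k) (SS i G k)) UNIV
      = infsum (\<lambda>k. ip (F k) (DS i G k) + ip (F k) (SS i G k)) UNIV"
    by (rule infsum_add[OF s3 s4, symmetric])
  also have "\<dots> = hinner K F (Us i G)"
    unfolding K_inner Us_def using i F G by simp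
  finally show ?thesis .
qed

lemma adjU: assumes i: "i \<in> I" and G: "G \<in> hcarrier K" shows "adj K (U i) G = Us i G"
  by (rule hs.adj_unique[OF K_hs]) (use Us_K[OF i G] adj_id[OF i _ G] in auto)

lemma UsU: assumes i: "i \<in> I" and F: "F \<in> hcarrier K" shows "Us i (U i F) = F"
proof
  fix k
  have FC: "\<And>k. F k \<in> C" using F by auto
  show "Us i (U i F) k = F k"
  proof (cases "e k i = 0")
    case True
    have A0: "A i (F (sg i k)) = z0" using KA[OF F i] i by simp
    have "Us i (U i F) k = sm (1 / be i (e k)) (A i (U i F k))"
      unfolding Us_def DS_def SS_def using True i F by simp
    also have "U i F k = pl (sm (be i (e k)) (V i (F k))) (sm (al i (e k)) (F (sg i k)))"
      unfolding U_def DU_def SU_def using True by simp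
    finally show ?thesis using i FC A0 by simp
  next
    case False
    have D0: "D i (F k) = F k" using D_fix[OF i FC KA[OF F i False]] .
    have "Us i (U i F) k = sm (1 / al i (e k)) (D i (U i F (tu i k)))"
      unfolding Us_def DS_def SS_def using False i F by simp
    also have "U i F (tu i k) = pl (DU i F (tu i k)) (sm (al i (e k)) (F k))"
      unfolding U_def SU_def using sg_tu[OF i False] i by simp
    finally have e1: "Us i (U i F) k = sm (1 / al i (e k)) (D i (pl (DU i F (tu i k)) (sm (al i (e k)) (F k))))" .
    have "D i (DU i F (tu i k)) = z0" unfolding DU_def using i FC by simp
    then show ?thesis unfolding e1 using i F FC D0 by simp
  qed
qed

lemma UUs: assumes i: "i \<in> I" and G: "G \<in> hcarrier K" shows "U i (Us i G) = G"
proof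
  fix k
  have GC: "\<And>k. G k \<in> C" using G by auto
  show "U i (Us i G) k = G k"
  proof (cases "e k i = 0")
    case True
    have "Us i G k = sm (1 / be i (e k)) (A i (G k))"
      unfolding Us_def DS_def SS_def using True i GC by simp
    moreover have "Us i G (sg i k) = sm (1 / al i (e k)) (D i (G k))"
      unfolding Us_def DS_def SS_def using i GC by simp
    ultimately have "U i (Us i G) k = pl (V i (A i (G k))) (D i (G k))"
      unfolding U_def DU_def SU_def using True i GC by simp
    also have "\<dots> = G k" unfolding D_def using i GC
      by (intro vec_eqI) (simp_all add: algebra_simps)
    finally show ?thesis .
  next
    case False
    have D0: "D i (G k) = G k" using D_fix[OF i GC KA[OF G i False]] .
    have "Us i G (sg i k) = sm (1 / al i (e k)) (D i (G k))"
      unfolding Us_def DS_def SS_def using i GC by simp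
    then show ?thesis unfolding U_def DU_def SU_def using False i GC D0 by simp
  qed
qed

end




context dnc
begin

lemma rel_comp:
  assumes i: "i \<in> I" and j: "j \<in> I" and ij: "i \<noteq> j" and F: "F \<in> hcarrier K"
  shows "Us i (U j F) k = sm (1 / z i j) (U j (Us i F) k)"
proof -
  have FC: "\<And>k. F k \<in> C" using F by auto
  have UK: "U j F \<in> hcarrier K" using U_K[OF j F] .
  have UsK: "Us i F \<in> hcarrier K" using Us_K[OF i F] .
  have zn: "z i j \<noteq> 0" "z j i \<noteq> 0" using z_nz i j ij by auto
  have zs: "z j i = 1 / z i j" using z_swap[OF i j ij] .
  have ji: "j \<noteq> i" using ij by auto
  show ?thesis
  proof (cases "e k i = 0")
    case True
    have L: "Us i (U j F) k = sm (1 / be i (e k)) (A i (U j F k))"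
      unfolding Us_def DS_def SS_def using True i UK by simp
    have H0: "Us i F k = sm (1 / be i (e k)) (A i (F k))"
      unfolding Us_def DS_def SS_def using True i FC by simp
    have H1: "Us i F (sg j k) = sm (1 / (be i (e k) * (1 / z i j))) (A i (F (sg j k)))"
      unfolding Us_def DS_def SS_def using True i j ij FC be_inc[OF i j ij] zs by simp
    show ?thesis
    proof (cases "e k j = 0")
      case True2: True
      have R: "U j (Us i F) k = pl (sm (be j (e k)) (V j (Us i F k))) (sm (al j (e k)) (Us i F (sg j k)))"
        unfolding U_def DU_def SU_def using True2 by simp
      have UjF: "U j F k = pl (sm (be j (e k)) (V j (F k))) (sm (al j (e k)) (F (sg j k)))"
        unfolding U_def DU_def SU_def using True2 by simp
      show ?thesis unfolding L R H0 H1 UjF using i j ij FC zn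
        by (intro vec_eqI) (simp_all add: field_simps)
    next
      case False2: False
      have R: "U j (Us i F) k = sm (al j (e k)) (Us i F (sg j k))"
        unfolding U_def DU_def SU_def using False2 j UsK by simp
      have UjF: "U j F k = sm (al j (e k)) (F (sg j k))"
        unfolding U_def DU_def SU_def using False2 j FC by simp
      show ?thesis unfolding L R H1 UjF using i j ij FC zn
        by (intro vec_eqI) (simp_all add: field_simps)
    qed
  next
    case False
    have L: "Us i (U j F) k = sm (1 / al i (e k)) (D i (U j F (tu i k)))"
      unfolding Us_def DS_def SS_def using False i UK by simp
    have H0: "Us i F k = sm (1 / al i (e k)) (D i (F (tu i k)))"
      unfolding Us_def DS_def SS_def using False i FC by simp
    have H1: "Us i F (sg j k) = sm (1 / (al i (e k) * (if j < i then 1 / z i j else 1))) (D i (F (sg j (tu i k))))"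
      unfolding Us_def DS_def SS_def using False i j ij FC al_inc[OF i j ij] sg_tu_comm[OF i j ij] zs by simp
    have ald: "al j (dec i (e k)) = al j (e k) / (if i < j then z i j else 1)"
      using al_dec[of j i "e k", OF j i ji False] .
    have bed: "be j (dec i (e k)) = be j (e k) / z i j"
      using be_dec[of j i "e k", OF j i ji False] .
    show ?thesis
    proof (cases "e k j = 0")
      case True2: True
      have R: "U j (Us i F) k = pl (sm (be j (e k)) (V j (Us i F k))) (sm (al j (e k)) (Us i F (sg j k)))"
        unfolding U_def DU_def SU_def using True2 by simp
      have UjF: "U j F (tu i k) = pl (sm (be j (e k) / z i j) (V j (F (tu i k)))) (sm (al j (e k) / (if i < j then z i j else 1)) (F (sg j (tu i k))))"
        unfolding U_def DU_def SU_def using True2 i ij ald bed by simp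
      show ?thesis unfolding L R H0 H1 UjF using i j ij FC zn
        by (intro vec_eqI) (simp_all add: field_simps)
    next
      case False2: False
      have R: "U j (Us i F) k = sm (al j (e k)) (Us i F (sg j k))"
        unfolding U_def DU_def SU_def using False2 j UsK by simp
      have UjF: "U j F (tu i k) = sm (al j (e k) / (if i < j then z i j else 1)) (F (sg j (tu i k)))"
        unfolding U_def DU_def SU_def using False2 i ij j FC ald by simp
      show ?thesis unfolding L R H1 UjF using i j ij FC zn
        by (intro vec_eqI) (simp_all add: field_simps)
    qed
  qed
qed

end




context dnc
begin

lemma K_add: "hadd K F G = (\<lambda>k. pl (F k) (G k))" unfolding K_def l2_simps ..
lemma K_scale: "hscale K a F = (\<lambda>k. sm a (F k))" unfolding K_def l2_simps ..
lemma K_sub: "hsub K F G = (\<lambda>k. hsub X (F k) (G k))" unfolding K_def by (rule l2_hsub)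
lemma K_hadd_in: "F \<in> hcarrier K \<Longrightarrow> G \<in> hcarrier K \<Longrightarrow> hadd K F G \<in> hcarrier K"
  using hs.add_in[OF K_hs] by blast
lemma K_hscale_in: "F \<in> hcarrier K \<Longrightarrow> hscale K a F \<in> hcarrier K"
  using hs.scale_in[OF K_hs] by blast

lemma U_add: assumes i: "i \<in> I" and F: "F \<in> hcarrier K" and G: "G \<in> hcarrier K"
  shows "U i (hadd K F G) = hadd K (U i F) (U i G)"
proof
  fix k
  have FC: "\<And>k. F k \<in> C" "\<And>k. G k \<in> C" using F G by auto
  show "U i (hadd K F G) k = hadd K (U i F) (U i G) k"
    unfolding K_add U_def DU_def SU_def using i FC
    by (cases "e k i = 0") (simp_all, (intro vec_eqI; simp add: algebra_simps)+)
qed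

lemma U_scale: assumes i: "i \<in> I" and F: "F \<in> hcarrier K"
  shows "U i (hscale K a F) = hscale K a (U i F)"
proof
  fix k
  have FC: "\<And>k. F k \<in> C" using F by auto
  show "U i (hscale K a F) k = hscale K a (U i F) k"
    unfolding K_scale U_def DU_def SU_def using i FC
    by (cases "e k i = 0") (simp_all, (intro vec_eqI; simp add: algebra_simps)+)
qed

lemma U_norm: assumes i: "i \<in> I" and F: "F \<in> hcarrier K"
  shows "hnorm K (U i F) = hnorm K F"
proof -
  have "hinner K (U i F) (U i F) = hinner K F (Us i (U i F))" by (rule adj_id[OF i F U_K[OF i F]])
  then have "hinner K (U i F) (U i F) = hinner K F F" using UsU[OF i F] by simp
  then show ?thesis unfolding hnorm_def by simp
qed

lemma U_bounded: assumes i: "i \<in> I" shows "bounded_op K (U i)"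
  unfolding bounded_op_def
proof (intro conjI ballI allI)
  show "U i x \<in> hcarrier K" if "x \<in> hcarrier K" for x using U_K[OF i that] .
  show "U i (hadd K x y) = hadd K (U i x) (U i y)" if "x \<in> hcarrier K" "y \<in> hcarrier K" for x y
    using U_add[OF i that] .
  show "U i (hscale K a x) = hscale K a (U i x)" if "x \<in> hcarrier K" for a x
    using U_scale[OF i that] .
  show "\<exists>c. \<forall>x\<in>hcarrier K. hnorm K (U i x) \<le> c * hnorm K x"
    by (rule exI[of _ 1]) (simp add: U_norm[OF i])
qed

lemma U_unitary: assumes i: "i \<in> I" shows "unitary_op K (U i)"
  unfolding unitary_op_def
  using U_bounded[OF i] adjU[OF i] UsU[OF i] UUs[OF i] U_K[OF i] by simp

lemma U_dnc: "doubly_noncommuting K n z U"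
  unfolding doubly_noncommuting_def
proof (intro conjI ballI impI)
  fix i assume i: "i \<in> I"
  show "isometry_op K (U i)" unfolding isometry_op_def
    using U_bounded[OF i] adjU[OF i] UsU[OF i] U_K[OF i] by simp
next
  fix i j x assume i: "i \<in> I" and j: "j \<in> I" and ij: "i \<noteq> j" and x: "x \<in> hcarrier K"
  have "adj K (U i) (U j x) = Us i (U j x)" using adjU[OF i U_K[OF j x]] .
  also have "\<dots> = (\<lambda>k. sm (1 / z i j) (U j (Us i x) k))" using rel_comp[OF i j ij x] by (intro ext) simp
  also have "\<dots> = hscale K (cnj (z i j)) (U j (adj K (U i) x))"
    unfolding K_scale adjU[OF i x] cnj_z[OF i j ij] ..
  finally show "adj K (U i) (U j x) = hscale K (cnj (z i j)) (U j (adj K (U i) x))" .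
qed

definition J :: "'a \<Rightarrow> nat \<Rightarrow> 'a" where "J h = (\<lambda>k. if k = k0 then h else z0)"
definition P :: "(nat \<Rightarrow> 'a) \<Rightarrow> 'a" where "P F = F k0"

lemma Sp_zero: "Sp (\<lambda>_. 0) = {}" unfolding Sp_def by simp
lemma W_empty: "W {} = C" unfolding W_def by simp

lemma J_K: assumes h: "h \<in> C" shows "J h \<in> hcarrier K"
proof (rule K_intro)
  fix k show "J h k \<in> W (Sp (e k))"
    unfolding J_def using h closed_sub_zero[OF W_closed[OF Sp_I]] Sp_zero W_empty by auto
next
  have "(\<lambda>k. nsq (J h k)) summable_on UNIV"
    by (rule finite_nonzero_values_imp_summable_on, rule finite_subset[of _ "{k0}"]) (auto simp: J_def)
  then show "sqs (J h)" unfolding sqs_def J_def using h by auto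
qed

lemma J_inner: assumes "x \<in> C" "y \<in> C" shows "hinner K (J x) (J y) = ip x y"
proof -
  have "hinner K (J x) (J y) = infsum (\<lambda>k. ip (J x k) (J y k)) UNIV" by (rule K_inner)
  also have "\<dots> = infsum (\<lambda>k. ip (J x k) (J y k)) {k0}"
    by (rule infsum_cong_neutral) (use assms in \<open>auto simp: J_def\<close>)
  also have "\<dots> = ip x y" by (simp add: J_def)
  finally show ?thesis .
qed

lemma J_emb: "hembedding X K J"
  unfolding hembedding_def
proof (intro conjI ballI allI)
  show "J x \<in> hcarrier K" if "x \<in> C" for x using J_K that .
  show "J (pl x y) = hadd K (J x) (J y)" if "x \<in> C" "y \<in> C" for x y
    unfolding K_add J_def using that by auto
  show "J (sm a x) = hscale K a (J x)" if "x \<in> C" for a x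
    unfolding K_scale J_def using that by auto
  show "hinner K (J x) (J y) = ip x y" if "x \<in> C" "y \<in> C" for x y using J_inner that .
qed

lemma P_proj: "orth_proj X K J P"
  unfolding orth_proj_def
proof (intro ballI conjI)
  fix F assume F: "F \<in> hcarrier K"
  show "P F \<in> C" unfolding P_def using F by simp
  fix h assume h: "h \<in> C"
  have "hinner K (hsub K F (J (P F))) (J h) = infsum (\<lambda>k. ip (hsub X (F k) (J (P F) k)) (J h k)) UNIV"
    unfolding K_inner K_sub ..
  also have "(\<lambda>k. ip (hsub X (F k) (J (P F) k)) (J h k)) = (\<lambda>k. 0)"
    by (rule ext) (use F h in \<open>auto simp: J_def P_def\<close>)
  finally show "hinner K (hsub K F (J (P F))) (J h) = 0" by simp
qed

lemma U_J: assumes i: "i \<in> I" and h: "h \<in> C" shows "U i (J h) = J (V i h)"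
proof
  fix k
  show "U i (J h) k = J (V i h) k"
  proof (cases "k = k0")
    case True
    then show ?thesis unfolding U_def DU_def SU_def J_def using i h sg_ne_k0[OF i] by simp
  next
    case False
    then show ?thesis unfolding U_def DU_def SU_def J_def using i h sg_ne_k0[OF i] by simp
  qed
qed

lemma adj_J: assumes i: "i \<in> I" and h: "h \<in> C" shows "A i h = P (adj K (U i) (J h))"
proof -
  have Ah: "A i h \<in> C" using i h by simp
  have "P (adj K (U i) (J h)) = Us i (J h) k0" unfolding P_def adjU[OF i J_K[OF h]] ..
  also have "\<dots> = pl (sm 1 (A i h)) z0" unfolding Us_def DS_def SS_def J_def by simp
  also have "\<dots> = A i h" using Ah by simp
  finally show ?thesis by simp
qed

end

lemma final_aux:
  fixes H :: "'a hspace" and n :: nat and z :: "nat \<Rightarrow> nat \<Rightarrow> complex"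
    and V :: "nat \<Rightarrow> 'a \<Rightarrow> 'a"
  assumes "n \<ge> 1"
    and "\<And>i j. i \<in> {1..n} \<Longrightarrow> j \<in> {1..n} \<Longrightarrow> i \<noteq> j \<Longrightarrow> cmod (z i j) = 1"
    and "\<And>i j. i \<in> {1..n} \<Longrightarrow> j \<in> {1..n} \<Longrightarrow> i \<noteq> j \<Longrightarrow> z j i = cnj (z i j)"
    and "hilbert_space H"
    and "doubly_noncommuting H n z V"
  shows "\<exists>(K :: (nat \<Rightarrow> 'a) hspace) J P U.
           hilbert_space K \<and> hembedding H K J \<and> orth_proj H K J P \<and>
           (\<forall>i\<in>{1..n}. unitary_op K (U i)) \<and>
           doubly_noncommuting K n z U \<and>
           (\<forall>i\<in>{1..n}. U i ` (J ` hcarrier H) \<subseteq> J ` hcarrier H) \<and>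
           (\<forall>i\<in>{1..n}. \<forall>h\<in>hcarrier H. U i (J h) = J (V i h)) \<and>
           (\<forall>i\<in>{1..n}. \<forall>h\<in>hcarrier H. adj H (V i) h = P (adj K (U i) (J h)))"
proof -
  have hsH: "hs H" by (rule hs.intro) (rule assms(4))
  have "dnc_axioms H n z V" by (rule dnc_axioms.intro) (fact assms)+
  then interpret dnc H n z V by (rule dnc.intro[OF hsH])
  have inv: "\<forall>i\<in>{1..n}. U i ` (J ` hcarrier H) \<subseteq> J ` hcarrier H"
  proof
    fix i assume i: "i \<in> {1..n}"
    show "U i ` (J ` hcarrier H) \<subseteq> J ` hcarrier H"
    proof
      fix y assume "y \<in> U i ` (J ` hcarrier H)"
      then obtain h where h: "h \<in> hcarrier H" and y: "y = U i (J h)" by blast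
      have "y = J (V i h)" using y U_J[OF i h] by simp
      moreover have "V i h \<in> hcarrier H" using i h by simp
      ultimately show "y \<in> J ` hcarrier H" by blast
    qed
  qed
  show ?thesis
  proof (intro exI[of _ K] exI[of _ J] exI[of _ P] exI[of _ U] conjI)
    show "hilbert_space K" by (rule K_hilbert)
    show "hembedding H K J" by (rule J_emb)
    show "orth_proj H K J P" by (rule P_proj)
    show "\<forall>i\<in>{1..n}. unitary_op K (U i)" using U_unitary by blast
    show "doubly_noncommuting K n z U" by (rule U_dnc)
    show "\<forall>i\<in>{1..n}. U i ` (J ` hcarrier H) \<subseteq> J ` hcarrier H" by (rule inv)
    show "\<forall>i\<in>{1..n}. \<forall>h\<in>hcarrier H. U i (J h) = J (V i h)" using U_J by blast
    show "\<forall>i\<in>{1..n}. \<forall>h\<in>hcarrier H. adj H (V i) h = P (adj K (U i) (J h))" using adj_J by blast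
  qed
qed


theorem theorem6p2:
  fixes H :: "'a hspace" and n :: nat and z :: "nat \<Rightarrow> nat \<Rightarrow> complex"
    and V :: "nat \<Rightarrow> 'a \<Rightarrow> 'a"
  assumes "n \<ge> 1"
    and "\<And>i j. i \<in> {1..n} \<Longrightarrow> j \<in> {1..n} \<Longrightarrow> i \<noteq> j \<Longrightarrow> cmod (z i j) = 1"
    and "\<And>i j. i \<in> {1..n} \<Longrightarrow> j \<in> {1..n} \<Longrightarrow> i \<noteq> j \<Longrightarrow> z j i = cnj (z i j)"
    and "hilbert_space H"
    and "doubly_noncommuting H n z V"
  shows "\<exists>(K :: (nat \<Rightarrow> 'a) hspace) J P U.
           hilbert_space K \<and> hembedding H K J \<and> orth_proj H K J P \<and>
           (\<forall>i\<in>{1..n}. unitary_op K (U i)) \<and>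
           doubly_noncommuting K n z U \<and>
           (\<forall>i\<in>{1..n}. U i ` (J ` hcarrier H) \<subseteq> J ` hcarrier H) \<and>
           (\<forall>i\<in>{1..n}. \<forall>h\<in>hcarrier H. U i (J h) = J (V i h)) \<and>
           (\<forall>i\<in>{1..n}. \<forall>h\<in>hcarrier H. adj H (V i) h = P (adj K (U i) (J h)))"
  by (rule final_aux) (fact assms)+

end
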